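(* Let $n\ge1,m,k,l$ be non-negative integers with $m,k\le n$ and $m+k-n\le l\le\min(m,k)$, and let $X$ be a random variable with $\Pr[X=x]=p(x\mid n,m,k,l)$ for $x=0,1,\dots,\lfloor n/2\rfloor$. Then \[ \frac{\mathbb V[X]}{n^2}=\frac{\mathbb E[X]}{n}\Bigl(1-\frac{\mathbb E[X]}{n}\Bigr)+\frac{\mathbb E[X]}{n^2}-\eta,\qquad \eta:=\frac{m(n-m)-(m-l)(n-m-k+l)}{n^2}. \]
   Context: Let $M:=m-l$, $N:=n-m-k+l$. Let $\mathbb{C}^2$ have orthonormal basis $|0\rangle,|1\rangle$ and give $(\mathbb{C}^2)^{\otimes n}$ the induced Hermitian inner product. Define $|\Xi_{n,m|k,l}\rangle:=|1\rangle^{\otimes l}\otimes|0\rangle^{\otimes(k-l)}\otimes\binom{M+N}{M}^{-1/2}\sum_{I}|I\rangle$, the sum over all $I\in\{0,1\}^{n-k}$ with exactly $M$ ones (where $|i_1\cdots i_r\rangle=|i_1\rangle\otimes\cdots\otimes|i_r\rangle$). $\mathfrak S_n$ acts on $(\mathbb{C}^2)^{\otimes n}$ by permuting tensor factors. For $0\le x\le\lfloor n/2\rfloor$, $\mathsf P_{(n-x,x)}$ is the orthogonal projection onto the isotypic component of the irreducible $\mathfrak S_n$-representation labelled by the partition $(n-x,x)$, and $p(x\mid n,m,k,l):=\langle\Xi_{n,m|k,l}|\mathsf P_{(n-x,x)}|\Xi_{n,m|k,l}\rangle$; these values form a probability distribution on $\{0,\dots,\lfloor n/2\rfloor\}$.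 *)

theory Defs
  imports Complex_Main "HOL-Combinatorics.Permutations"
begin

text \<open>Vectors of (C^2)^{\<otimes>n} are modelled as functions from bit strings to complex
  amplitudes; a bit string i_0 ... i_{n-1} is represented by the set S of positions j < n
  with i_j = 1. Only S \<subseteq> {..<n} are basis vectors.\<close>

type_synonym qvec = "nat set \<Rightarrow> complex"

definition is_qvec :: "nat \<Rightarrow> qvec \<Rightarrow> bool" where
  "is_qvec n f \<longleftrightarrow> (\<forall>S. \<not> S \<subseteq> {..<n} \<longrightarrow> f S = 0)"

definition qinner :: "nat \<Rightarrow> qvec \<Rightarrow> qvec \<Rightarrow> complex" where
  "qinner n f g = (\<Sum>S\<in>Pow {..<n}. cnj (f S) * g S)"

text \<open>Action of a permutation of the tensor factors: the bit in position j is moved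
  to position sigma j. The same formula is the natural action on functions of
  tabloids (identified with their second-row set).\<close>
definition pact :: "(nat \<Rightarrow> nat) \<Rightarrow> qvec \<Rightarrow> qvec" where
  "pact \<sigma> f = (\<lambda>S. f (inv \<sigma> ` S))"

definition cspan :: "qvec set \<Rightarrow> qvec set" where
  "cspan A = {f. \<exists>(k::nat) c v. (\<forall>i<k. v i \<in> A) \<and> f = (\<lambda>S. \<Sum>i<k. c i * v i S)}"

text \<open>Specht module S^{(n-x,x)} inside the permutation module M^{(n-x,x)}, whose tabloids
  are identified with their second row (an x-subset of {..<n}). A Young tableau of shape
  (n-x,x) is given (as far as the polytabloid is concerned) by its x columns of length two:
  column i has entry a i in the first row and b i in the second row; the remaining
  n - 2x entries form columns of length one and do not affect the polytabloid.\<close>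
definition is_tableau_cols :: "nat \<Rightarrow> nat \<Rightarrow> (nat \<Rightarrow> nat) \<Rightarrow> (nat \<Rightarrow> nat) \<Rightarrow> bool" where
  "is_tableau_cols n x a b \<longleftrightarrow>
     inj_on a {..<x} \<and> inj_on b {..<x} \<and> a ` {..<x} \<inter> b ` {..<x} = {} \<and>
     a ` {..<x} \<subseteq> {..<n} \<and> b ` {..<x} \<subseteq> {..<n}"

definition polytabloid :: "nat \<Rightarrow> (nat \<Rightarrow> nat) \<Rightarrow> (nat \<Rightarrow> nat) \<Rightarrow> qvec" where
  "polytabloid x a b = (\<lambda>S. \<Sum>C\<in>Pow {..<x}.
      (-1) ^ card C * (if S = b ` ({..<x} - C) \<union> a ` C then 1 else 0))"

definition specht :: "nat \<Rightarrow> nat \<Rightarrow> qvec set" where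
  "specht n x = cspan {polytabloid x a b | a b. is_tableau_cols n x a b}"

definition equiv_map :: "nat \<Rightarrow> nat \<Rightarrow> (qvec \<Rightarrow> qvec) \<Rightarrow> bool" where
  "equiv_map n x L \<longleftrightarrow>
     (\<forall>f\<in>specht n x. is_qvec n (L f)) \<and>
     (\<forall>f\<in>specht n x. \<forall>g\<in>specht n x. L (\<lambda>S. f S + g S) = (\<lambda>S. L f S + L g S)) \<and>
     (\<forall>f\<in>specht n x. \<forall>c. L (\<lambda>S. c * f S) = (\<lambda>S. c * L f S)) \<and>
     (\<forall>\<sigma>. \<sigma> permutes {..<n} \<longrightarrow> (\<forall>f\<in>specht n x. L (pact \<sigma> f) = pact \<sigma> (L f)))"

text \<open>Isotypic component of the irreducible S_n-representation labelled by (n-x,x):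
  the sum of all subrepresentations isomorphic to S^{(n-x,x)}, i.e. the span of the
  images of all equivariant maps from S^{(n-x,x)}.\<close>
definition isotypic :: "nat \<Rightarrow> nat \<Rightarrow> qvec set" where
  "isotypic n x = cspan {L f | L f. equiv_map n x L \<and> f \<in> specht n x}"

definition orth_proj :: "nat \<Rightarrow> qvec set \<Rightarrow> qvec \<Rightarrow> qvec" where
  "orth_proj n U v = (THE u. u \<in> U \<and> (\<forall>w\<in>U. qinner n w (\<lambda>S. v S - u S) = 0))"

definition Xi :: "nat \<Rightarrow> nat \<Rightarrow> nat \<Rightarrow> nat \<Rightarrow> qvec" where
  "Xi n m k l = (\<lambda>S.
     if S \<subseteq> {..<n} \<and> {..<l} \<subseteq> S \<and> S \<inter> {l..<k} = {} \<and> card (S \<inter> {k..<n}) = m - l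
     then complex_of_real (1 / sqrt (real ((n - k) choose (m - l)))) else 0)"

definition pdist :: "nat \<Rightarrow> nat \<Rightarrow> nat \<Rightarrow> nat \<Rightarrow> nat \<Rightarrow> real" where
  "pdist x n m k l = Re (qinner n (Xi n m k l) (orth_proj n (isotypic n x) (Xi n m k l)))"

definition EX_p :: "nat \<Rightarrow> nat \<Rightarrow> nat \<Rightarrow> nat \<Rightarrow> real" where
  "EX_p n m k l = (\<Sum>x\<le>n div 2. real x * pdist x n m k l)"

definition VX_p :: "nat \<Rightarrow> nat \<Rightarrow> nat \<Rightarrow> nat \<Rightarrow> real" where
  "VX_p n m k l = (\<Sum>x\<le>n div 2. (real x - EX_p n m k l)^2 * pdist x n m k l)"

end

theory Submission
  imports Defs
begin


lemma cspan_zero: "(\<lambda>S. 0) \<in> cspan A"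
  unfolding cspan_def by (rule CollectI, rule exI[of _ 0]) auto

lemma cspan_add1:
  assumes "f \<in> cspan A" "v \<in> A"
  shows "(\<lambda>S. f S + c * v S) \<in> cspan A"
proof -
  obtain k :: nat and d :: "nat \<Rightarrow> complex" and w :: "nat \<Rightarrow> qvec" where kw: "\<forall>i<k. w i \<in> A" "f = (\<lambda>S. \<Sum>i<k. d i * w i S)"
    using assms(1) unfolding cspan_def by blast
  let ?d = "d(k := c)" and ?w = "w(k := v)"
  have "(\<lambda>S. f S + c * v S) = (\<lambda>S. \<Sum>i<Suc k. ?d i * ?w i S)"
    by (simp add: kw(2))
  moreover have "\<forall>i<Suc k. ?w i \<in> A" using kw(1) assms(2) by (auto simp: less_Suc_eq)
  ultimately show ?thesis unfolding cspan_def by blast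
qed

lemma cspan_base: "v \<in> A \<Longrightarrow> v \<in> cspan A"
  using cspan_add1[OF cspan_zero, of v A 1] by simp

lemma cspan_induct [consumes 1, case_names zero add1]:
  assumes "f \<in> cspan A"
    and "P (\<lambda>S. 0)"
    and "\<And>g c v. P g \<Longrightarrow> v \<in> A \<Longrightarrow> P (\<lambda>S. g S + c * v S)"
  shows "P f"
proof -
  obtain k :: nat and d :: "nat \<Rightarrow> complex" and w :: "nat \<Rightarrow> qvec" where kw: "\<forall>i<k. w i \<in> A" "f = (\<lambda>S. \<Sum>i<k. d i * w i S)"
    using assms(1) unfolding cspan_def by blast
  have "P (\<lambda>S. \<Sum>i<j. d i * w i S)" if "j \<le> k" for j
    using that
  proof (induction j)
    case 0 then show ?case using assms(2) by simp
  next
    case (Suc j)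
    then have "P (\<lambda>S. (\<Sum>i<j. d i * w i S) + d j * w j S)"
      using assms(3)[of "\<lambda>S. \<Sum>i<j. d i * w i S" "w j" "d j"] kw(1) by auto
    then show ?case by simp
  qed
  then show ?thesis using kw(2) by simp
qed

lemma cspan_add:
  assumes "f \<in> cspan A" "g \<in> cspan A"
  shows "(\<lambda>S. f S + g S) \<in> cspan A"
  using assms(2)
proof (induction rule: cspan_induct)
  case zero then show ?case using assms(1) by simp
next
  case (add1 h c v)
  have "(\<lambda>S. f S + (h S + c * v S)) = (\<lambda>S. (f S + h S) + c * v S)" by (simp add: algebra_simps)
  then show ?case using cspan_add1[OF add1(1) add1(2)] by simp
qed

lemma cspan_scale:
  assumes "f \<in> cspan A"
  shows "(\<lambda>S. c * f S) \<in> cspan A"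
  using assms
proof (induction rule: cspan_induct)
  case zero then show ?case using cspan_zero by simp
next
  case (add1 h d v)
  have "(\<lambda>S. c * (h S + d * v S)) = (\<lambda>S. c * h S + (c * d) * v S)" by (simp add: algebra_simps)
  then show ?case using cspan_add1[OF add1(1) add1(2)] by simp
qed

lemma cspan_diff:
  assumes "f \<in> cspan A" "g \<in> cspan A"
  shows "(\<lambda>S. f S - g S) \<in> cspan A"
  using cspan_add[OF assms(1) cspan_scale[OF assms(2), of "-1"]] by simp

lemma cspan_sum:
  fixes c :: "'i \<Rightarrow> complex"
  assumes "finite I" "\<And>i. i \<in> I \<Longrightarrow> g i \<in> cspan A"
  shows "(\<lambda>S. \<Sum>i\<in>I. c i * g i S) \<in> cspan A"
  using assms
proof (induction I rule: finite_induct)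
  case empty then show ?case using cspan_zero by simp
next
  case (insert j I)
  have "(\<lambda>S. \<Sum>i\<in>insert j I. c i * g i S) = (\<lambda>S. (\<Sum>i\<in>I. c i * g i S) + c j * g j S)"
    using insert(1,2) by (simp add: add.commute)
  have "g j \<in> cspan A" using insert.prems by auto
  then have "(\<lambda>S. c j * g j S) \<in> cspan A" by (rule cspan_scale)
  then show ?case using cspan_add[OF insert.IH] insert.prems \<open>(\<lambda>S. \<Sum>i\<in>insert j I. c i * g i S) = _\<close> by auto
qed

lemma cspan_mono: "A \<subseteq> B \<Longrightarrow> cspan A \<subseteq> cspan B"
  unfolding cspan_def by blast

lemma cspan_closed:
  assumes "f \<in> cspan A" "\<And>v. v \<in> A \<Longrightarrow> P v" "P (\<lambda>S. 0)"
    "\<And>g h. P g \<Longrightarrow> P h \<Longrightarrow> P (\<lambda>S. g S + h S)" "\<And>g c. P g \<Longrightarrow> P (\<lambda>S. c * g S)"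
  shows "P f"
  using assms(1)
proof (induction rule: cspan_induct)
  case zero then show ?case using assms(3) .
next
  case (add1 g c v) then show ?case using assms(2,4,5) by blast
qed

definition Uop :: "nat \<Rightarrow> qvec \<Rightarrow> qvec" where
  "Uop n f = (\<lambda>S. if S \<subseteq> {..<n} then (\<Sum>i\<in>S. f (S - {i})) else 0)"

definition Dop :: "nat \<Rightarrow> qvec \<Rightarrow> qvec" where
  "Dop n f = (\<lambda>S. if S \<subseteq> {..<n} then (\<Sum>j\<in>{..<n} - S. f (insert j S)) else 0)"

definition cw :: "nat \<Rightarrow> nat \<Rightarrow> complex" where
  "cw n s = of_nat s * (of_nat n - of_nat s + 1)"

definition Mul :: "nat \<Rightarrow> (nat \<Rightarrow> complex) \<Rightarrow> qvec \<Rightarrow> qvec" where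
  "Mul n h f = (\<lambda>S. if S \<subseteq> {..<n} then h (card S) * f S else 0)"

definition Top :: "nat \<Rightarrow> qvec \<Rightarrow> qvec" where
  "Top n f = (\<lambda>S. Mul n (cw n) f S - Uop n (Dop n f) S)"

definition wsp :: "nat \<Rightarrow> nat \<Rightarrow> qvec \<Rightarrow> bool" where
  "wsp n w f \<longleftrightarrow> is_qvec n f \<and> (\<forall>S. card S \<noteq> w \<longrightarrow> f S = 0)"

lemma subset_lessThan_finite: "S \<subseteq> {..<(n::nat)} \<Longrightarrow> finite S"
  using finite_subset by blast

lemma qvec_Uop: "is_qvec n (Uop n f)" unfolding is_qvec_def Uop_def by auto
lemma qvec_Dop: "is_qvec n (Dop n f)" unfolding is_qvec_def Dop_def by auto
lemma qvec_Mul: "is_qvec n (Mul n h f)" unfolding is_qvec_def Mul_def by auto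
lemma qvec_Top: "is_qvec n (Top n f)" unfolding is_qvec_def Top_def Mul_def Uop_def by auto
lemma qvec_zero: "is_qvec n (\<lambda>S. 0)" unfolding is_qvec_def by auto
lemma qvec_add: "is_qvec n f \<Longrightarrow> is_qvec n g \<Longrightarrow> is_qvec n (\<lambda>S. f S + g S)"
  unfolding is_qvec_def by auto
lemma qvec_diff: "is_qvec n f \<Longrightarrow> is_qvec n g \<Longrightarrow> is_qvec n (\<lambda>S. f S - g S)"
  unfolding is_qvec_def by auto
lemma qvec_scale: "is_qvec n f \<Longrightarrow> is_qvec n (\<lambda>S. c * f S)"
  unfolding is_qvec_def by auto
lemma qvec_sum: "(\<And>i. i \<in> I \<Longrightarrow> is_qvec n (g i)) \<Longrightarrow> is_qvec n (\<lambda>S. \<Sum>i\<in>I. g i S)"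
  unfolding is_qvec_def by auto

lemma Uop_add: "Uop n (\<lambda>S. f S + g S) = (\<lambda>S. Uop n f S + Uop n g S)"
  unfolding Uop_def by (auto simp: sum.distrib)
lemma Uop_scale: "Uop n (\<lambda>S. c * f S) = (\<lambda>S. c * Uop n f S)"
  unfolding Uop_def by (auto simp: sum_distrib_left)
lemma Uop_diff: "Uop n (\<lambda>S. f S - g S) = (\<lambda>S. Uop n f S - Uop n g S)"
  unfolding Uop_def by (auto simp: sum_subtractf)
lemma Uop_zero: "Uop n (\<lambda>S. 0) = (\<lambda>S. 0)"
  unfolding Uop_def by auto
lemma Dop_add: "Dop n (\<lambda>S. f S + g S) = (\<lambda>S. Dop n f S + Dop n g S)"
  unfolding Dop_def by (auto simp: sum.distrib)
lemma Dop_scale: "Dop n (\<lambda>S. c * f S) = (\<lambda>S. c * Dop n f S)"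
  unfolding Dop_def by (auto simp: sum_distrib_left)
lemma Dop_diff: "Dop n (\<lambda>S. f S - g S) = (\<lambda>S. Dop n f S - Dop n g S)"
  unfolding Dop_def by (auto simp: sum_subtractf)
lemma Dop_zero: "Dop n (\<lambda>S. 0) = (\<lambda>S. 0)"
  unfolding Dop_def by auto
lemma Mul_add: "Mul n h (\<lambda>S. f S + g S) = (\<lambda>S. Mul n h f S + Mul n h g S)"
  unfolding Mul_def by (auto simp: algebra_simps)
lemma Mul_scale: "Mul n h (\<lambda>S. c * f S) = (\<lambda>S. c * Mul n h f S)"
  unfolding Mul_def by (auto simp: algebra_simps)
lemma Mul_diff: "Mul n h (\<lambda>S. f S - g S) = (\<lambda>S. Mul n h f S - Mul n h g S)"
  unfolding Mul_def by (auto simp: algebra_simps)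
lemma Top_add: "Top n (\<lambda>S. f S + g S) = (\<lambda>S. Top n f S + Top n g S)"
  unfolding Top_def by (simp add: Mul_add Dop_add Uop_add fun_eq_iff algebra_simps)
lemma Top_scale: "Top n (\<lambda>S. c * f S) = (\<lambda>S. c * Top n f S)"
  unfolding Top_def by (simp add: Mul_scale Dop_scale Uop_scale algebra_simps)
lemma Top_diff: "Top n (\<lambda>S. f S - g S) = (\<lambda>S. Top n f S - Top n g S)"
  unfolding Top_def by (simp add: Mul_diff Dop_diff Uop_diff fun_eq_iff algebra_simps)
lemma Top_zero: "Top n (\<lambda>S. 0) = (\<lambda>S. 0)"
  using Top_scale[of n 0 "\<lambda>S. 0"] by simp

lemma Uop_sum: "finite I \<Longrightarrow> Uop n (\<lambda>S. \<Sum>i\<in>I. g i S) = (\<lambda>S. \<Sum>i\<in>I. Uop n (g i) S)"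
  by (induction I rule: finite_induct) (simp_all add: Uop_zero Uop_add)
lemma Top_sum: "finite I \<Longrightarrow> Top n (\<lambda>S. \<Sum>i\<in>I. g i S) = (\<lambda>S. \<Sum>i\<in>I. Top n (g i) S)"
  by (induction I rule: finite_induct) (simp_all add: Top_zero Top_add)

section \<open>Commutation\<close>

lemma UD_expand:
  assumes "S \<subseteq> {..<n}"
  shows "Uop n (Dop n f) S = of_nat (card S) * f S + (\<Sum>i\<in>S. \<Sum>j\<in>{..<n} - S. f (insert j (S - {i})))"
proof -
  have fin: "finite S" using assms subset_lessThan_finite by blast
  have "Uop n (Dop n f) S = (\<Sum>i\<in>S. Dop n f (S - {i}))" using assms by (simp add: Uop_def)
  also have "\<dots> = (\<Sum>i\<in>S. f S + (\<Sum>j\<in>{..<n} - S. f (insert j (S - {i}))))"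
  proof (rule sum.cong[OF refl])
    fix i assume i: "i \<in> S"
    have e: "{..<n} - (S - {i}) = insert i ({..<n} - S)" using i assms by auto
    have "S - {i} \<subseteq> {..<n}" using assms by auto
    then have "Dop n f (S - {i}) = (\<Sum>j\<in>insert i ({..<n} - S). f (insert j (S - {i})))"
      by (simp add: Dop_def e)
    also have "\<dots> = f (insert i (S - {i})) + (\<Sum>j\<in>{..<n} - S. f (insert j (S - {i})))"
      using i by (intro sum.insert) auto
    also have "insert i (S - {i}) = S" using i by auto
    finally show "Dop n f (S - {i}) = f S + (\<Sum>j\<in>{..<n} - S. f (insert j (S - {i})))" .
  qed
  also have "\<dots> = of_nat (card S) * f S + (\<Sum>i\<in>S. \<Sum>j\<in>{..<n} - S. f (insert j (S - {i})))"
    by (simp add: sum.distrib)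
  finally show ?thesis .
qed

lemma DU_expand:
  assumes "S \<subseteq> {..<n}"
  shows "Dop n (Uop n f) S = of_nat (n - card S) * f S + (\<Sum>i\<in>S. \<Sum>j\<in>{..<n} - S. f (insert j (S - {i})))"
proof -
  have fin: "finite S" using assms subset_lessThan_finite by blast
  have "Dop n (Uop n f) S = (\<Sum>j\<in>{..<n} - S. Uop n f (insert j S))" using assms by (simp add: Dop_def)
  also have "\<dots> = (\<Sum>j\<in>{..<n} - S. f S + (\<Sum>i\<in>S. f (insert j (S - {i}))))"
  proof (rule sum.cong[OF refl])
    fix j assume j: "j \<in> {..<n} - S"
    have "Uop n f (insert j S) = (\<Sum>i\<in>insert j S. f (insert j S - {i}))"
      using assms j by (simp add: Uop_def)
    also have "\<dots> = f (insert j S - {j}) + (\<Sum>i\<in>S. f (insert j S - {i}))"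
      using j fin by (simp add: sum.insert)
    also have "insert j S - {j} = S" using j by auto
    also have "(\<Sum>i\<in>S. f (insert j S - {i})) = (\<Sum>i\<in>S. f (insert j (S - {i})))"
      by (rule sum.cong[OF refl]) (use j in \<open>auto intro!: arg_cong[where f=f]\<close>)
    finally show "Uop n f (insert j S) = f S + (\<Sum>i\<in>S. f (insert j (S - {i})))" .
  qed
  also have "\<dots> = of_nat (card ({..<n} - S)) * f S + (\<Sum>j\<in>{..<n} - S. \<Sum>i\<in>S. f (insert j (S - {i})))"
    by (simp add: sum.distrib)
  also have "card ({..<n} - S) = n - card S" using assms fin by (simp add: card_Diff_subset)
  also have "(\<Sum>j\<in>{..<n} - S. \<Sum>i\<in>S. f (insert j (S - {i}))) = (\<Sum>i\<in>S. \<Sum>j\<in>{..<n} - S. f (insert j (S - {i})))"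
    by (rule sum.swap)
  finally show ?thesis .
qed

lemma card_le_n: "S \<subseteq> {..<n} \<Longrightarrow> card S \<le> n"
  using card_mono[of "{..<n}" S] by auto

lemma DU_comm:
  assumes "S \<subseteq> {..<n}"
  shows "Dop n (Uop n f) S = Uop n (Dop n f) S + (of_nat n - 2 * of_nat (card S)) * f S"
proof -
  have "Dop n (Uop n f) S - Uop n (Dop n f) S = of_nat (n - card S) * f S - of_nat (card S) * f S"
    using DU_expand[OF assms, of f] UD_expand[OF assms, of f] by simp
  then show ?thesis using card_le_n[OF assms] by (simp add: of_nat_diff algebra_simps)
qed

lemma DU_fun:
  assumes "is_qvec n f"
  shows "Dop n (Uop n f) = (\<lambda>S. Uop n (Dop n f) S + Mul n (\<lambda>s. of_nat n - 2 * of_nat s) f S)"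
proof
  fix S show "Dop n (Uop n f) S = Uop n (Dop n f) S + Mul n (\<lambda>s. of_nat n - 2 * of_nat s) f S"
  proof (cases "S \<subseteq> {..<n}")
    case True then show ?thesis by (simp add: DU_comm Mul_def)
  next
    case False then show ?thesis by (simp add: Mul_def Dop_def Uop_def)
  qed
qed

lemma Mul_apply: "S \<subseteq> {..<n} \<Longrightarrow> Mul n h f S = h (card S) * f S"
  by (simp add: Mul_def)

lemma Uop_Mul:
  "Uop n (Mul n h f) = (\<lambda>S. (if S = {} then 0 else h (card S - 1)) * Uop n f S)"
proof
  fix S
  show "Uop n (Mul n h f) S = (if S = {} then 0 else h (card S - 1)) * Uop n f S"
  proof (cases "S \<subseteq> {..<n}")
    case True
    then have fin: "finite S" using subset_lessThan_finite by blast
    have "Uop n (Mul n h f) S = (\<Sum>i\<in>S. h (card S - 1) * f (S - {i}))"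
      using True fin by (auto simp: Uop_def Mul_def intro!: sum.cong)
    then show ?thesis using True by (auto simp: Uop_def sum_distrib_left)
  next
    case False then show ?thesis by (simp add: Uop_def)
  qed
qed

lemma cw_step: "cw n (Suc s) - cw n s = of_nat n - 2 * of_nat s"
  unfolding cw_def by (simp add: algebra_simps)

lemma Top_Uop:
  assumes "is_qvec n f"
  shows "Top n (Uop n f) = Uop n (Top n f)"
proof
  fix S
  have q: "is_qvec n (Dop n f)" "is_qvec n (Uop n f)" by (simp_all add: qvec_Dop qvec_Uop)
  have "Uop n (Top n f) = (\<lambda>S. Uop n (Mul n (cw n) f) S - Uop n (Uop n (Dop n f)) S)"
    unfolding Top_def by (simp add: Uop_diff)
  moreover have "Top n (Uop n f) = (\<lambda>S. Mul n (cw n) (Uop n f) S - Uop n (Uop n (Dop n f)) S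
      - Uop n (Mul n (\<lambda>s. of_nat n - 2 * of_nat s) f) S)"
    unfolding Top_def DU_fun[OF assms] by (simp add: Uop_add fun_eq_iff algebra_simps)
  ultimately show "Top n (Uop n f) S = Uop n (Top n f) S"
  proof (cases "S \<subseteq> {..<n} \<and> S \<noteq> {}")
    case True
    then have fin: "finite S" using subset_lessThan_finite by blast
    then obtain s where s: "card S = Suc s" using True by (cases "card S") auto
    have c: "cw n (Suc s) = cw n s + (of_nat n - 2 * of_nat s)" using cw_step[of n s] by (simp add: algebra_simps)
    have "Top n (Uop n f) S = cw n (Suc s) * Uop n f S - Uop n (Uop n (Dop n f)) S
      - (of_nat n - 2 * of_nat s) * Uop n f S"
      using True s \<open>Top n (Uop n f) = _\<close> by (simp add: Uop_Mul Mul_apply)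
    moreover have "Uop n (Top n f) S = cw n s * Uop n f S - Uop n (Uop n (Dop n f)) S"
      using True s \<open>Uop n (Top n f) = _\<close> by (simp add: Uop_Mul)
    ultimately show ?thesis using c by (simp add: algebra_simps) (metis add_right_cancel)
  next
    case False
    then show ?thesis using \<open>Uop n (Top n f) = _\<close> \<open>Top n (Uop n f) = _\<close>
      by (auto simp: Uop_Mul Mul_def Uop_def)
  qed
qed



lemma Dop_Mul: "Dop n (Mul n h f) = (\<lambda>S. h (Suc (card S)) * Dop n f S)"
proof
  fix S show "Dop n (Mul n h f) S = h (Suc (card S)) * Dop n f S"
  proof (cases "S \<subseteq> {..<n}")
    case True
    then have fin: "finite S" using subset_lessThan_finite by blast
    have "Dop n (Mul n h f) S = (\<Sum>j\<in>{..<n} - S. h (Suc (card S)) * f (insert j S))"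
      using True fin by (auto simp: Dop_def Mul_def intro!: sum.cong)
    then show ?thesis using True by (simp add: Dop_def sum_distrib_left)
  next
    case False then show ?thesis by (simp add: Dop_def)
  qed
qed

lemma Top_Dop:
  assumes "is_qvec n f"
  shows "Top n (Dop n f) = Dop n (Top n f)"
proof
  fix S
  have e1: "Dop n (Top n f) = (\<lambda>S. cw n (Suc (card S)) * Dop n f S - Dop n (Uop n (Dop n f)) S)"
    unfolding Top_def by (simp add: Dop_diff Dop_Mul)
  show "Top n (Dop n f) S = Dop n (Top n f) S"
  proof (cases "S \<subseteq> {..<n}")
    case True
    have "Dop n (Top n f) S = cw n (Suc (card S)) * Dop n f S - Uop n (Dop n (Dop n f)) S
       - (of_nat n - 2 * of_nat (card S)) * Dop n f S"
      using e1 DU_comm[OF True, of "Dop n f"] by simp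
    moreover have "Top n (Dop n f) S = cw n (card S) * Dop n f S - Uop n (Dop n (Dop n f)) S"
      using True by (simp add: Top_def Mul_apply)
    moreover have "cw n (Suc (card S)) - (of_nat n - 2 * of_nat (card S)) = cw n (card S)"
      using cw_step[of n "card S"] by (simp add: algebra_simps)
    ultimately show ?thesis by (simp add: left_diff_distrib[symmetric])
  next
    case False then show ?thesis by (simp add: Top_def Mul_def Uop_def Dop_def)
  qed
qed

section \<open>weight spaces\<close>

lemma wsp_zero: "wsp n w (\<lambda>S. 0)" by (simp add: wsp_def is_qvec_def)
lemma wsp_add: "wsp n w f \<Longrightarrow> wsp n w g \<Longrightarrow> wsp n w (\<lambda>S. f S + g S)"
  by (simp add: wsp_def is_qvec_def)
lemma wsp_diff: "wsp n w f \<Longrightarrow> wsp n w g \<Longrightarrow> wsp n w (\<lambda>S. f S - g S)"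
  by (simp add: wsp_def is_qvec_def)
lemma wsp_scale: "wsp n w f \<Longrightarrow> wsp n w (\<lambda>S. c * f S)"
  by (simp add: wsp_def is_qvec_def)
lemma wsp_sum: "(\<And>i. i \<in> I \<Longrightarrow> wsp n w (g i)) \<Longrightarrow> wsp n w (\<lambda>S. \<Sum>i\<in>I. g i S)"
  by (simp add: wsp_def is_qvec_def)
lemma wsp_qvec: "wsp n w f \<Longrightarrow> is_qvec n f" by (simp add: wsp_def)

lemma wsp_Uop:
  assumes "wsp n w f" shows "wsp n (Suc w) (Uop n f)"
  unfolding wsp_def
proof (intro conjI allI impI)
  show "is_qvec n (Uop n f)" by (rule qvec_Uop)
  fix S :: "nat set" assume c: "card S \<noteq> Suc w"
  show "Uop n f S = 0"
  proof (cases "S \<subseteq> {..<n}")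
    case True
    then have fin: "finite S" using subset_lessThan_finite by blast
    have "\<forall>i\<in>S. f (S - {i}) = 0"
    proof
      fix i assume "i \<in> S"
      moreover have "card S > 0" using fin \<open>i \<in> S\<close> by (auto simp: card_gt_0_iff)
      ultimately have "card (S - {i}) \<noteq> w" using c fin by (simp add: card_Diff_singleton)
      then show "f (S - {i}) = 0" using assms by (simp add: wsp_def)
    qed
    then show ?thesis by (simp add: Uop_def)
  qed (simp add: Uop_def)
qed

lemma wsp_Dop:
  assumes "wsp n (Suc w) f" shows "wsp n w (Dop n f)"
  unfolding wsp_def
proof (intro conjI allI impI)
  show "is_qvec n (Dop n f)" by (rule qvec_Dop)
  fix S :: "nat set" assume c: "card S \<noteq> w"
  show "Dop n f S = 0"
  proof (cases "S \<subseteq> {..<n}")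
    case True
    then have fin: "finite S" using subset_lessThan_finite by blast
    have "\<forall>j\<in>{..<n} - S. f (insert j S) = 0"
    proof
      fix j assume "j \<in> {..<n} - S"
      then have "card (insert j S) \<noteq> Suc w" using c fin by simp
      then show "f (insert j S) = 0" using assms by (simp add: wsp_def)
    qed
    then show ?thesis by (simp add: Dop_def)
  qed (simp add: Dop_def)
qed

lemma wsp0_Dop:
  assumes "wsp n 0 f" shows "Dop n f = (\<lambda>S. 0)"
proof
  fix S show "Dop n f S = 0"
  proof (cases "S \<subseteq> {..<n}")
    case True
    then have fin: "finite S" using subset_lessThan_finite by blast
    have "\<forall>j\<in>{..<n} - S. f (insert j S) = 0" using assms fin by (simp add: wsp_def)
    then show ?thesis by (simp add: Dop_def)
  qed (simp add: Dop_def)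
qed

lemma wsp_big:
  assumes "wsp n w f" "n < w" shows "f = (\<lambda>S. 0)"
proof
  fix S show "f S = 0"
  proof (cases "S \<subseteq> {..<n}")
    case True then have "card S \<le> n" by (rule card_le_n)
    then show ?thesis using assms by (simp add: wsp_def)
  next
    case False then show ?thesis using assms by (simp add: wsp_def is_qvec_def)
  qed
qed

lemma wsp_Mul: "wsp n w f \<Longrightarrow> Mul n h f = (\<lambda>S. h w * f S)"
  by (auto simp: fun_eq_iff Mul_def wsp_def is_qvec_def)

lemma Top_wsp: "wsp n w f \<Longrightarrow> Top n f = (\<lambda>S. cw n w * f S - Uop n (Dop n f) S)"
  unfolding Top_def by (simp add: wsp_Mul)

lemma Top_wsp':
  assumes "wsp n w f" "w \<le> n"
  shows "Top n f = (\<lambda>S. cw n (n - w) * f S - Dop n (Uop n f) S)"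
proof -
  have "Top n f = (\<lambda>S. cw n w * f S - (Dop n (Uop n f) S - Mul n (\<lambda>s. of_nat n - 2 * of_nat s) f S))"
    using Top_wsp[OF assms(1)] DU_fun[OF wsp_qvec[OF assms(1)]] by (simp add: fun_eq_iff)
  also have "\<dots> = (\<lambda>S. (cw n w + (of_nat n - 2 * of_nat w)) * f S - Dop n (Uop n f) S)"
    using wsp_Mul[OF assms(1)] by (simp add: fun_eq_iff algebra_simps)
  also have "cw n w + (of_nat n - 2 * of_nat w) = cw n (n - w)"
    using assms(2) by (simp add: cw_def of_nat_diff algebra_simps)
  finally show ?thesis .
qed

lemma wsp_Top: "wsp n w f \<Longrightarrow> wsp n w (Top n f)"
proof -
  assume a: "wsp n w f"
  have "wsp n w (Uop n (Dop n f))"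
  proof (cases w)
    case 0 then show ?thesis using a wsp0_Dop[of n f] by (simp add: Uop_zero wsp_zero)
  next
    case (Suc v) then show ?thesis using a wsp_Uop wsp_Dop by simp
  qed
  then show ?thesis using Top_wsp[OF a] wsp_diff[OF wsp_scale[OF a]] by metis
qed

lemma cw_0 [simp]: "cw n 0 = 0" by (simp add: cw_def)

fun polyapp :: "nat \<Rightarrow> complex list \<Rightarrow> qvec \<Rightarrow> qvec" where
  "polyapp n [] f = f"
| "polyapp n (c # cs) f = (\<lambda>S. Top n (polyapp n cs f) S - c * polyapp n cs f S)"

lemma polyapp_wsp: "wsp n w f \<Longrightarrow> wsp n w (polyapp n cs f)"
  by (induction cs) (auto intro!: wsp_diff wsp_scale wsp_Top)

lemma polyapp_qvec: "is_qvec n f \<Longrightarrow> is_qvec n (polyapp n cs f)"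
  by (induction cs) (auto intro!: qvec_diff qvec_scale simp: qvec_Top)

lemma polyapp_add: "polyapp n cs (\<lambda>S. f S + g S) = (\<lambda>S. polyapp n cs f S + polyapp n cs g S)"
  apply (induction cs) apply (simp_all add: Top_add) by (simp add: fun_eq_iff algebra_simps)
lemma polyapp_scale: "polyapp n cs (\<lambda>S. a * f S) = (\<lambda>S. a * polyapp n cs f S)"
  apply (induction cs) apply (simp_all add: Top_scale) by (simp add: fun_eq_iff algebra_simps)
lemma polyapp_diff: "polyapp n cs (\<lambda>S. f S - g S) = (\<lambda>S. polyapp n cs f S - polyapp n cs g S)"
  apply (induction cs) apply (simp_all add: Top_diff) by (simp add: fun_eq_iff algebra_simps)
lemma polyapp_zero: "polyapp n cs (\<lambda>S. 0) = (\<lambda>S. 0)"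
  using polyapp_scale[of n cs 0 "\<lambda>S. 0"] by simp
lemma polyapp_Top: "polyapp n cs (Top n f) = Top n (polyapp n cs f)"
  apply (induction cs) apply (simp_all add: Top_diff Top_scale) done
lemma polyapp_Uop: "is_qvec n f \<Longrightarrow> polyapp n cs (Uop n f) = Uop n (polyapp n cs f)"
  apply (induction cs) apply (simp_all add: Top_Uop polyapp_qvec Uop_diff Uop_scale) done
lemma polyapp_Dop: "is_qvec n f \<Longrightarrow> polyapp n cs (Dop n f) = Dop n (polyapp n cs f)"
  apply (induction cs) apply (simp_all add: Top_Dop polyapp_qvec Dop_diff Dop_scale) done
lemma polyapp_append: "polyapp n (xs @ ys) f = polyapp n xs (polyapp n ys f)"
  by (induction xs) auto
lemma polyapp_eigen:
  assumes "Top n f = (\<lambda>S. a * f S)"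
  shows "polyapp n cs f = (\<lambda>S. (\<Prod>c\<leftarrow>cs. (a - c)) * f S)"
proof (induction cs)
  case Nil then show ?case by simp
next
  case (Cons c cs)
  show ?case unfolding polyapp.simps Cons.IH Top_scale assms by (simp add: fun_eq_iff algebra_simps)
qed

lemma poly_up:
  assumes "2 * w \<le> n" "wsp n w f"
  shows "polyapp n (map (cw n) [0..<Suc w]) f = (\<lambda>S. 0)"
  using assms
proof (induction w arbitrary: f)
  case 0
  have "Top n f = (\<lambda>S. 0)" using Top_wsp[OF 0(2)] wsp0_Dop[OF 0(2)]
    by (simp add: Uop_zero cw_def)
  then show ?case by simp
next
  case (Suc w)
  have q: "is_qvec n (Dop n f)" by (rule qvec_Dop)
  have "polyapp n [cw n (Suc w)] f = (\<lambda>S. - Uop n (Dop n f) S)"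
    using Top_wsp[OF Suc(3)] by simp
  moreover have "polyapp n (map (cw n) [0..<Suc w]) (Dop n f) = (\<lambda>S. 0)"
    using Suc.IH[of "Dop n f"] Suc.prems wsp_Dop by simp
  moreover have "polyapp n (map (cw n) [0..<Suc w]) (\<lambda>S. - Uop n (Dop n f) S)
      = (\<lambda>S. - Uop n (polyapp n (map (cw n) [0..<Suc w]) (Dop n f)) S)"
    using polyapp_scale[of n _ "-1" "Uop n (Dop n f)"] polyapp_Uop[OF q] by simp
  moreover have "map (cw n) [0..<Suc (Suc w)] = map (cw n) [0..<Suc w] @ [cw n (Suc w)]" by simp
  ultimately show ?case
    by (simp only: polyapp_append) (simp add: Uop_zero)
qed

lemma poly_down:
  assumes "n \<le> 2 * w" "w \<le> n" "wsp n w f"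
  shows "polyapp n (map (cw n) [0..<Suc (n - w)]) f = (\<lambda>S. 0)"
  using assms
proof (induction "n - w" arbitrary: w f)
  case 0
  then have w: "w = n" by simp
  have "Uop n f = (\<lambda>S. 0)" using wsp_big[OF wsp_Uop[OF 0(4)]] w by simp
  then have "Top n f = (\<lambda>S. 0)" using Top_wsp'[OF 0(4) 0(3)] w
    by (simp add: Dop_zero cw_def)
  then show ?case using 0(1) by simp
next
  case (Suc d)
  have q: "is_qvec n (Uop n f)" by (rule qvec_Uop)
  have d: "d = n - Suc w" "n - w = Suc d" using Suc by auto
  have "polyapp n [cw n (Suc d)] f = (\<lambda>S. - Dop n (Uop n f) S)"
    using Top_wsp'[OF Suc(5) Suc(4)] d by simp
  moreover have "polyapp n (map (cw n) [0..<Suc d]) (Uop n f) = (\<lambda>S. 0)"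
    using Suc.hyps(1)[of "Suc w" "Uop n f"] Suc.prems d wsp_Uop by simp
  moreover have "polyapp n (map (cw n) [0..<Suc d]) (\<lambda>S. - Dop n (Uop n f) S)
      = (\<lambda>S. - Dop n (polyapp n (map (cw n) [0..<Suc d]) (Uop n f)) S)"
    using polyapp_scale[of n _ "-1" "Dop n (Uop n f)"] polyapp_Dop[OF q] by simp
  moreover have "map (cw n) [0..<Suc (n - w)] = map (cw n) [0..<Suc d] @ [cw n (Suc d)]" using d by simp
  ultimately show ?case
    by (simp only: polyapp_append) (simp add: Dop_zero)
qed

lemma poly_all:
  assumes "w \<le> n" "wsp n w f"
  shows "polyapp n (map (cw n) [0..<Suc (min w (n - w))]) f = (\<lambda>S. 0)"
proof (cases "2 * w \<le> n")
  case True then have "min w (n - w) = w" by simp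
  then show ?thesis using poly_up[OF True assms(2)] by simp
next
  case False then have "min w (n - w) = n - w" by simp
  then show ?thesis using poly_down[OF _ assms] False by simp
qed

lemma cw_real: "cw n s = complex_of_real (real s * (real n - real s + 1))"
  by (simp add: cw_def)

lemma cw_lt:
  assumes "y < x" "x + y \<le> n"
  shows "Re (cw n y) < Re (cw n x)"
proof -
  have "real x * (real n - real x + 1) - real y * (real n - real y + 1)
      = (real x - real y) * (real n + 1 - real x - real y)" by (simp add: algebra_simps)
  moreover have "(real x - real y) * (real n + 1 - real x - real y) > 0"
    using assms by (intro mult_pos_pos) (simp_all add: of_nat_less_iff)
  ultimately show ?thesis by (simp add: cw_real)
qed

lemma cw_neq: "y < x \<Longrightarrow> x + y \<le> n \<Longrightarrow> cw n y \<noteq> cw n x"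
  using cw_lt by force

lemma eigen_zero:
  assumes "wsp n w v" "Top n v = (\<lambda>S. a * v S)" "\<And>y. y \<le> w \<Longrightarrow> y \<le> n - w \<Longrightarrow> cw n y \<noteq> a"
  shows "v = (\<lambda>S. 0)"
proof (cases "w \<le> n")
  case True
  have "polyapp n (map (cw n) [0..<Suc (min w (n - w))]) v = (\<lambda>S. 0)" by (rule poly_all[OF True assms(1)])
  then have "(\<lambda>S. (\<Prod>c\<leftarrow>map (cw n) [0..<Suc (min w (n - w))]. (a - c)) * v S) = (\<lambda>S. 0)"
    using polyapp_eigen[OF assms(2)] by simp
  moreover have "(\<Prod>c\<leftarrow>map (cw n) [0..<Suc (min w (n - w))]. (a - c)) \<noteq> 0"
  proof
    assume "(\<Prod>c\<leftarrow>map (cw n) [0..<Suc (min w (n - w))]. (a - c)) = 0"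
    then obtain y where "y < Suc (min w (n - w))" "a - cw n y = 0"
      unfolding prod_list_zero_iff by (auto simp del: upt_Suc)
    then show False using assms(3)[of y] by (simp add: less_Suc_eq_le)
  qed
  ultimately show ?thesis by (simp add: fun_eq_iff)
next
  case False then show ?thesis using wsp_big[OF assms(1)] by simp
qed

lemma eig_decomp:
  assumes "distinct cs" "wsp n w f" "polyapp n cs f = (\<lambda>S. 0)"
  shows "\<exists>g. (\<forall>c. wsp n w (g c) \<and> Top n (g c) = (\<lambda>S. c * g c S)) \<and> f = (\<lambda>S. \<Sum>c\<in>set cs. g c S)"
  using assms
proof (induction cs arbitrary: f)
  case Nil
  then show ?case by (intro exI[of _ "\<lambda>c S. 0"]) (simp add: wsp_zero Top_zero)
next
  case (Cons c cs)
  let ?h = "polyapp n cs f"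
  have Th: "Top n ?h = (\<lambda>S. c * ?h S)" using Cons.prems(3) by (simp add: fun_eq_iff)
  define \<pi> where "\<pi> = (\<Prod>c'\<leftarrow>cs. (c - c'))"
  have \<pi>0: "\<pi> \<noteq> 0" using Cons.prems(1) by (auto simp: \<pi>_def prod_list_zero_iff)
  define f1 where "f1 = (\<lambda>S. (1 / \<pi>) * ?h S)"
  have Tf1: "Top n f1 = (\<lambda>S. c * f1 S)" unfolding f1_def Top_scale Th by (simp add: fun_eq_iff)
  have pf1: "polyapp n cs f1 = ?h"
    using polyapp_eigen[OF Tf1, of cs] \<pi>0 by (simp add: f1_def \<pi>_def[symmetric] fun_eq_iff)
  have wf1: "wsp n w f1" unfolding f1_def by (intro wsp_scale polyapp_wsp Cons.prems(2))
  have "polyapp n cs (\<lambda>S. f S - f1 S) = (\<lambda>S. 0)" by (simp add: polyapp_diff pf1)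
  then obtain g where g: "\<forall>c. wsp n w (g c) \<and> Top n (g c) = (\<lambda>S. c * g c S)"
    "(\<lambda>S. f S - f1 S) = (\<lambda>S. \<Sum>c\<in>set cs. g c S)"
    using Cons.IH[of "\<lambda>S. f S - f1 S"] Cons.prems wsp_diff[OF Cons.prems(2) wf1] by auto
  let ?g = "g(c := f1)"
  have "f = (\<lambda>S. \<Sum>c'\<in>set (c # cs). ?g c' S)"
  proof
    fix S
    have "(\<Sum>c'\<in>set (c # cs). ?g c' S) = f1 S + (\<Sum>c'\<in>set cs. ?g c' S)"
      using Cons.prems(1) by (simp add: sum.insert)
    also have "(\<Sum>c'\<in>set cs. ?g c' S) = (\<Sum>c'\<in>set cs. g c' S)"
      using Cons.prems(1) by (intro sum.cong) auto
    also have "\<dots> = f S - f1 S" using fun_cong[OF g(2), of S] by simp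
    finally show "f S = (\<Sum>c'\<in>set (c # cs). ?g c' S)" by simp
  qed
  moreover have "\<forall>c'. wsp n w (?g c') \<and> Top n (?g c') = (\<lambda>S. c' * ?g c' S)"
    using g(1) wf1 Tf1 by auto
  ultimately show ?case by blast
qed



definition ins :: "nat \<Rightarrow> qvec \<Rightarrow> qvec" where
  "ins c g = (\<lambda>S. if c \<in> S then g (S - {c}) else 0)"

definition pmul :: "nat \<Rightarrow> nat \<Rightarrow> qvec \<Rightarrow> qvec" where
  "pmul a b g = (\<lambda>S. ins b g S - ins a g S)"

definition avoids :: "nat \<Rightarrow> qvec \<Rightarrow> bool" where
  "avoids c g \<longleftrightarrow> (\<forall>S. g S \<noteq> 0 \<longrightarrow> c \<notin> S)"

lemma poly_0: "polytabloid 0 a b = (\<lambda>S. if S = {} then 1 else 0)"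
  by (simp add: polytabloid_def fun_eq_iff)

lemma poly_support:
  assumes "polytabloid x a b S \<noteq> 0"
  shows "\<exists>C. C \<subseteq> {..<x} \<and> S = b ` ({..<x} - C) \<union> a ` C"
proof (rule ccontr)
  assume "\<not> ?thesis"
  then have "polytabloid x a b S = 0" unfolding polytabloid_def by (auto intro!: sum.neutral)
  then show False using assms by simp
qed

lemma poly_subset:
  assumes "polytabloid x a b S \<noteq> 0"
  shows "S \<subseteq> a ` {..<x} \<union> b ` {..<x}"
  using poly_support[OF assms] by auto

lemma poly_card:
  assumes "is_tableau_cols n x a b" "polytabloid x a b S \<noteq> 0"
  shows "card S = x"
proof -
  obtain C where C: "C \<subseteq> {..<x}" "S = b ` ({..<x} - C) \<union> a ` C" using poly_support[OF assms(2)] by blast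
  have ia: "inj_on a C" and ib: "inj_on b ({..<x} - C)"
    using assms(1) C(1) unfolding is_tableau_cols_def by (auto intro: inj_on_subset)
  have d: "b ` ({..<x} - C) \<inter> a ` C = {}" using assms(1) C(1) unfolding is_tableau_cols_def by blast
  have fC: "finite C" using C(1) finite_subset by blast
  have "card S = card (b ` ({..<x} - C)) + card (a ` C)"
    unfolding C(2) by (rule card_Un_disjoint) (use fC d in auto)
  also have "\<dots> = (x - card C) + card C"
    using card_image[OF ia] card_image[OF ib] C(1) fC by (simp add: card_Diff_subset)
  also have "\<dots> = x" using card_mono[OF _ C(1)] by simp
  finally show ?thesis .
qed

lemma poly_wsp:
  assumes "is_tableau_cols n x a b"
  shows "wsp n x (polytabloid x a b)"
  unfolding wsp_def is_qvec_def
proof (intro conjI allI impI)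
  fix S :: "nat set" assume "\<not> S \<subseteq> {..<n}"
  moreover have "a ` {..<x} \<union> b ` {..<x} \<subseteq> {..<n}" using assms unfolding is_tableau_cols_def by blast
  ultimately show "polytabloid x a b S = 0" using poly_subset[of x a b S] by (meson order_trans)
next
  fix S :: "nat set" assume "card S \<noteq> x"
  then show "polytabloid x a b S = 0" using poly_card[OF assms] by blast
qed

lemma poly_avoids:
  "c \<notin> a ` {..<x} \<union> b ` {..<x} \<Longrightarrow> avoids c (polytabloid x a b)"
  unfolding avoids_def using poly_subset[of x a b] by (meson subsetD)

lemma tableau_Suc:
  assumes "is_tableau_cols n (Suc x) a b"
  shows "is_tableau_cols n x a b" "a x \<notin> a ` {..<x} \<union> b ` {..<x}" "b x \<notin> a ` {..<x} \<union> b ` {..<x}"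
    "a x \<noteq> b x" "a x < n" "b x < n"
proof -
  have ia: "inj_on a (insert x {..<x})" and ib: "inj_on b (insert x {..<x})"
    and d: "a ` (insert x {..<x}) \<inter> b ` (insert x {..<x}) = {}"
    and s: "a ` (insert x {..<x}) \<subseteq> {..<n}" "b ` (insert x {..<x}) \<subseteq> {..<n}"
    using assms unfolding is_tableau_cols_def lessThan_Suc by auto
  show "is_tableau_cols n x a b" using ia ib d s unfolding is_tableau_cols_def
    by (auto intro: inj_on_subset)
  show "a x \<notin> a ` {..<x} \<union> b ` {..<x}" using ia d by (auto simp: inj_on_def)
  show "b x \<notin> a ` {..<x} \<union> b ` {..<x}" using ib d by (auto simp: inj_on_def)
  show "a x \<noteq> b x" "a x < n" "b x < n" using d s by auto
qed

lemma set_eq_insert_iff: "c \<notin> R \<Longrightarrow> (S = insert c R) \<longleftrightarrow> (c \<in> S \<and> S - {c} = R)"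
  by auto

lemma poly_Suc:
  assumes "is_tableau_cols n (Suc x) a b"
  shows "polytabloid (Suc x) a b = pmul (a x) (b x) (polytabloid x a b)"
proof
  fix S
  note t = tableau_Suc[OF assms]
  define R where "R C = b ` ({..<x} - C) \<union> a ` C" for C
  have Rsub: "R C \<subseteq> a ` {..<x} \<union> b ` {..<x}" if "C \<subseteq> {..<x}" for C
    using that unfolding R_def by auto
  have ax: "a x \<notin> R C" and bx: "b x \<notin> R C" if "C \<subseteq> {..<x}" for C
    using Rsub[OF that] t(2,3) by auto
  let ?t = "\<lambda>C. (-1::complex) ^ card C * (if S = b ` ({..<Suc x} - C) \<union> a ` C then 1 else 0)"
  have split: "Pow {..<Suc x} = Pow {..<x} \<union> insert x ` Pow {..<x}"
    by (simp add: lessThan_Suc Pow_insert)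
  have disj: "Pow {..<x} \<inter> insert x ` Pow {..<x} = {}" by auto
  have inj: "inj_on (insert x) (Pow {..<x})" by (auto simp: inj_on_def)
  have "polytabloid (Suc x) a b S = (\<Sum>C\<in>Pow {..<x}. ?t C) + (\<Sum>C\<in>insert x ` Pow {..<x}. ?t C)"
    unfolding polytabloid_def split by (rule sum.union_disjoint) (use disj in auto)
  also have "(\<Sum>C\<in>insert x ` Pow {..<x}. ?t C) = (\<Sum>C\<in>Pow {..<x}. ?t (insert x C))"
    by (rule sum.reindex[OF inj, unfolded comp_def])
  also have "(\<Sum>C\<in>Pow {..<x}. ?t C) = ins (b x) (polytabloid x a b) S"
  proof -
    have "?t C = (if b x \<in> S then (-1) ^ card C * (if S - {b x} = R C then 1 else 0) else 0)"
      if C: "C \<in> Pow {..<x}" for C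
    proof -
      have "b ` ({..<Suc x} - C) \<union> a ` C = insert (b x) (R C)"
        using C unfolding R_def lessThan_Suc by auto
      then show ?thesis using set_eq_insert_iff[OF bx, of C S] C by auto
    qed
    then have "(\<Sum>C\<in>Pow {..<x}. ?t C) =
      (\<Sum>C\<in>Pow {..<x}. (if b x \<in> S then (-1) ^ card C * (if S - {b x} = R C then 1 else 0) else 0))"
      by (rule sum.cong[OF refl])
    also have "\<dots> = ins (b x) (polytabloid x a b) S"
      unfolding ins_def polytabloid_def R_def by simp
    finally show ?thesis .
  qed
  also have "(\<Sum>C\<in>Pow {..<x}. ?t (insert x C)) = - ins (a x) (polytabloid x a b) S"
  proof -
    have "?t (insert x C) = - (if a x \<in> S then (-1) ^ card C * (if S - {a x} = R C then 1 else 0) else 0)"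
      if C: "C \<in> Pow {..<x}" for C
    proof -
      have fC: "finite C" using C finite_subset by auto
      have xC: "x \<notin> C" using C by auto
      have "b ` ({..<Suc x} - insert x C) \<union> a ` (insert x C) = insert (a x) (R C)"
        using C unfolding R_def lessThan_Suc by auto
      then show ?thesis using set_eq_insert_iff[OF ax, of C S] C fC xC by auto
    qed
    then have "(\<Sum>C\<in>Pow {..<x}. ?t (insert x C)) =
      (\<Sum>C\<in>Pow {..<x}. - (if a x \<in> S then (-1) ^ card C * (if S - {a x} = R C then 1 else 0) else 0))"
      by (rule sum.cong[OF refl])
    also have "\<dots> = - ins (a x) (polytabloid x a b) S"
      unfolding ins_def polytabloid_def R_def by (simp add: sum_negf)
    finally show ?thesis .
  qed
  finally show "polytabloid (Suc x) a b S = pmul (a x) (b x) (polytabloid x a b) S"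
    by (simp add: pmul_def)
qed

lemma avoids_Dop: "avoids c g \<Longrightarrow> avoids c (Dop n g)"
  unfolding avoids_def Dop_def
  by (auto intro!: sum.neutral)

lemma Dop_ins:
  assumes "c < n" "avoids c g"
  shows "Dop n (ins c g) = (\<lambda>T. ins c (Dop n g) T + (if T \<subseteq> {..<n} \<and> c \<notin> T then g T else 0))"
proof
  fix T
  show "Dop n (ins c g) T = ins c (Dop n g) T + (if T \<subseteq> {..<n} \<and> c \<notin> T then g T else 0)"
  proof (cases "T \<subseteq> {..<n}")
    case False
    then have "\<not> T - {c} \<subseteq> {..<n}" using assms(1) by auto
    then show ?thesis using False by (simp add: Dop_def ins_def)
  next
    case True
    then have fin: "finite T" using subset_lessThan_finite by blast
    show ?thesis
    proof (cases "c \<in> T")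
      case cT: True
      have gT: "g T = 0" using assms(2) cT unfolding avoids_def by blast
      have e: "{..<n} - (T - {c}) = insert c ({..<n} - T)" using cT True by auto
      have "Dop n (ins c g) T = (\<Sum>j\<in>{..<n} - T. g (insert j (T - {c})))"
        using True cT by (auto simp: Dop_def ins_def intro!: sum.cong arg_cong[where f=g])
      moreover have "ins c (Dop n g) T = g (insert c (T - {c})) + (\<Sum>j\<in>{..<n} - T. g (insert j (T - {c})))"
        using True cT fin by (simp add: ins_def Dop_def e subset_iff sum.insert)
      moreover have "insert c (T - {c}) = T" using cT by auto
      ultimately show ?thesis using gT cT by simp
    next
      case cT: False
      have "Dop n (ins c g) T = (\<Sum>j\<in>{..<n} - T. if j = c then g T else 0)"
        using True cT by (auto simp: Dop_def ins_def intro!: sum.cong)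
      also have "\<dots> = g T" using cT assms(1) by (simp add: sum.delta)
      finally show ?thesis using cT True by (simp add: ins_def)
    qed
  qed
qed

lemma Dop_pmul:
  assumes "a < n" "b < n" "avoids a g" "avoids b g"
  shows "Dop n (pmul a b g) = pmul a b (Dop n g)"
proof -
  have "Dop n (pmul a b g) = (\<lambda>T. Dop n (ins b g) T - Dop n (ins a g) T)"
    unfolding pmul_def by (rule Dop_diff)
  also have "\<dots> = pmul a b (Dop n g)"
  proof
    fix T
    have "(if T \<subseteq> {..<n} \<and> b \<notin> T then g T else 0) = (if T \<subseteq> {..<n} \<and> a \<notin> T then g T else 0)"
      using assms(3,4) unfolding avoids_def by auto
    then show "Dop n (ins b g) T - Dop n (ins a g) T = pmul a b (Dop n g) T"
      unfolding Dop_ins[OF assms(2,4)] Dop_ins[OF assms(1,3)] pmul_def by simp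
  qed
  finally show ?thesis .
qed

lemma pmul_zero: "pmul a b (\<lambda>S. 0) = (\<lambda>S. 0)"
  by (simp add: pmul_def ins_def fun_eq_iff)

lemma Dop_poly:
  assumes "is_tableau_cols n x a b"
  shows "Dop n (polytabloid x a b) = (\<lambda>S. 0)"
  using assms
proof (induction x)
  case 0
  show ?case unfolding poly_0 by (auto simp: Dop_def fun_eq_iff intro!: sum.neutral)
next
  case (Suc x)
  note t = tableau_Suc[OF Suc.prems]
  show ?case unfolding poly_Suc[OF Suc.prems]
    by (subst Dop_pmul) (use t poly_avoids Suc.IH in \<open>auto simp: pmul_zero\<close>)
qed



lemma specht_wsp_D:
  assumes "f \<in> specht n x"
  shows "wsp n x f \<and> Dop n f = (\<lambda>S. 0)"
  using assms unfolding specht_def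
proof (rule cspan_closed)
  fix v assume "v \<in> {polytabloid x a b |a b. is_tableau_cols n x a b}"
  then show "wsp n x v \<and> Dop n v = (\<lambda>S. 0)" using poly_wsp Dop_poly by blast
next
  show "wsp n x (\<lambda>S. 0) \<and> Dop n (\<lambda>S. 0) = (\<lambda>S. 0)" by (simp add: wsp_zero Dop_zero)
next
  fix g h assume "wsp n x g \<and> Dop n g = (\<lambda>S. 0)" "wsp n x h \<and> Dop n h = (\<lambda>S. 0)"
  then show "wsp n x (\<lambda>S. g S + h S) \<and> Dop n (\<lambda>S. g S + h S) = (\<lambda>S. 0)"
    by (simp add: wsp_add Dop_add)
next
  fix g c assume "wsp n x g \<and> Dop n g = (\<lambda>S. 0)"
  then show "wsp n x (\<lambda>S. c * g S) \<and> Dop n (\<lambda>S. c * g S) = (\<lambda>S. 0)"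
    by (simp add: wsp_scale Dop_scale)
qed

lemma poly_in_specht: "is_tableau_cols n x a b \<Longrightarrow> polytabloid x a b \<in> specht n x"
  unfolding specht_def by (rule cspan_base) blast

lemma tableau_mono: "is_tableau_cols N x a b \<Longrightarrow> N \<le> n \<Longrightarrow> is_tableau_cols n x a b"
  unfolding is_tableau_cols_def by auto

lemma specht_mono: "N \<le> n \<Longrightarrow> specht N x \<subseteq> specht n x"
  unfolding specht_def by (rule cspan_mono) (use tableau_mono in blast)

lemma specht_zero: "(\<lambda>S. 0) \<in> specht n x" unfolding specht_def by (rule cspan_zero)
lemma specht_add: "f \<in> specht n x \<Longrightarrow> g \<in> specht n x \<Longrightarrow> (\<lambda>S. f S + g S) \<in> specht n x"
  unfolding specht_def by (rule cspan_add)
lemma specht_scale: "f \<in> specht n x \<Longrightarrow> (\<lambda>S. c * f S) \<in> specht n x"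
  unfolding specht_def by (rule cspan_scale)
lemma specht_diff: "f \<in> specht n x \<Longrightarrow> g \<in> specht n x \<Longrightarrow> (\<lambda>S. f S - g S) \<in> specht n x"
  unfolding specht_def by (rule cspan_diff)

lemma poly_cong:
  assumes "\<And>i. i < x \<Longrightarrow> a i = a' i" "\<And>i. i < x \<Longrightarrow> b i = b' i"
  shows "polytabloid x a b = polytabloid x a' b'"
proof -
  have "b ` ({..<x} - C) \<union> a ` C = b' ` ({..<x} - C) \<union> a' ` C" if "C \<subseteq> {..<x}" for C
  proof -
    have "b ` ({..<x} - C) = b' ` ({..<x} - C)" using assms(2) by (intro image_cong) auto
    moreover have "a ` C = a' ` C" using assms(1) that by (intro image_cong) auto
    ultimately show ?thesis by simp
  qed
  then show ?thesis unfolding polytabloid_def by (intro ext sum.cong) auto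
qed

lemma specht0:
  assumes "wsp n 0 f"
  shows "f \<in> specht n 0"
proof -
  have t: "is_tableau_cols n 0 id id" by (simp add: is_tableau_cols_def)
  have "f = (\<lambda>S. f {} * polytabloid 0 id id S)"
  proof
    fix S show "f S = f {} * polytabloid 0 id id S"
    proof (cases "S = {}")
      case False
      have "f S = 0"
      proof (cases "S \<subseteq> {..<n}")
        case True
        then have "finite S" using subset_lessThan_finite by blast
        then have "card S \<noteq> 0" using False by simp
        then show ?thesis using assms by (simp add: wsp_def)
      next
        case False then show ?thesis using assms by (simp add: wsp_def is_qvec_def)
      qed
      then show ?thesis using False by (simp add: poly_0)
    qed (simp add: poly_0)
  qed
  then show ?thesis using specht_scale[OF poly_in_specht[OF t]] by metis
qed

lemma exists_fresh:
  assumes "card X < N" "finite X"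
  shows "\<exists>j. j < N \<and> j \<notin> X"
proof (rule ccontr)
  assume "\<not> ?thesis"
  then have "{..<N} \<subseteq> X" by auto
  then have "card {..<N} \<le> card X" using card_mono[OF assms(2)] by blast
  then have "N \<le> card X" by simp
  then show False using assms by simp
qed

lemma extend_specht:
  assumes "q \<in> specht N y" "2 * y < N"
  shows "\<exists>g\<in>specht (Suc N) (Suc y). \<forall>S. N \<in> S \<longrightarrow> g S = q (S - {N})"
proof -
  define E where "E = {q. \<exists>g\<in>specht (Suc N) (Suc y). \<forall>S. N \<in> S \<longrightarrow> g S = q (S - {N})}"
  have "q \<in> E"
    using assms(1) unfolding specht_def
  proof (rule cspan_closed[where P="\<lambda>q. q \<in> E"])
    fix v assume "v \<in> {polytabloid y a b |a b. is_tableau_cols N y a b}"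
    then obtain a b where v: "v = polytabloid y a b" and t: "is_tableau_cols N y a b" by blast
    let ?X = "a ` {..<y} \<union> b ` {..<y}"
    have "card ?X \<le> card (a ` {..<y}) + card (b ` {..<y})" by (rule card_Un_le)
    also have "\<dots> \<le> y + y" using card_image_le[of "{..<y}" a] card_image_le[of "{..<y}" b] by simp
    finally have "card ?X < N" using assms(2) by simp
    then obtain j where j: "j < N" "j \<notin> ?X" using exists_fresh[of ?X N] by auto
    have XN: "?X \<subseteq> {..<N}" using t unfolding is_tableau_cols_def by blast
    let ?a = "a(y := j)" and ?b = "b(y := N)"
    have ia: "?a ` {..<y} = a ` {..<y}" and ib: "?b ` {..<y} = b ` {..<y}" by auto
    have t0: "inj_on a {..<y}" "inj_on b {..<y}" "a ` {..<y} \<inter> b ` {..<y} = {}"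
      using t unfolding is_tableau_cols_def by auto
    have ia': "inj_on ?a {..<y}" using t0(1) by (rule inj_on_cong[THEN iffD1, rotated]) auto
    have ib': "inj_on ?b {..<y}" using t0(2) by (rule inj_on_cong[THEN iffD1, rotated]) auto
    have jn: "j \<notin> a ` {..<y}" "j \<notin> b ` {..<y}" using j(2) by auto
    have Nn: "N \<notin> a ` {..<y}" "N \<notin> b ` {..<y}" using XN by auto
    have ea: "?a ` insert y {..<y} = insert j (a ` {..<y})" unfolding image_insert ia by simp
    have eb: "?b ` insert y {..<y} = insert N (b ` {..<y})" unfolding image_insert ib by simp
    have t': "is_tableau_cols (Suc N) (Suc y) ?a ?b"
      unfolding is_tableau_cols_def lessThan_Suc[of y]
    proof (intro conjI)
      show "inj_on ?a (insert y {..<y})" using ia' jn ia by (simp add: inj_on_insert)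
      show "inj_on ?b (insert y {..<y})" using ib' Nn ib by (simp add: inj_on_insert)
      show "?a ` insert y {..<y} \<inter> ?b ` insert y {..<y} = {}"
        unfolding ea eb using t0(3) jn Nn j(1) by auto
      show "?a ` insert y {..<y} \<subseteq> {..<Suc N}" unfolding ea using XN j(1) by auto
      show "?b ` insert y {..<y} \<subseteq> {..<Suc N}" unfolding eb using XN by auto
    qed
    have p: "polytabloid (Suc y) ?a ?b = pmul j N (polytabloid y a b)"
      using poly_Suc[OF t'] poly_cong[of y ?a a ?b b] by simp
    have avN: "avoids N (polytabloid y a b)" using XN by (intro poly_avoids) auto
    have "\<forall>S. N \<in> S \<longrightarrow> polytabloid (Suc y) ?a ?b S = v (S - {N})"
    proof (intro allI impI)
      fix S assume NS: "N \<in> S"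
      have "ins j (polytabloid y a b) S = 0"
        using avN NS j(1) unfolding ins_def avoids_def by auto
      then show "polytabloid (Suc y) ?a ?b S = v (S - {N})"
        unfolding p pmul_def v using NS by (simp add: ins_def)
    qed
    moreover have "polytabloid (Suc y) ?a ?b \<in> cspan {polytabloid (Suc y) a b |a b. is_tableau_cols (Suc N) (Suc y) a b}"
      by (rule cspan_base) (use t' in blast)
    ultimately have "\<exists>g\<in>specht (Suc N) (Suc y). \<forall>S. N \<in> S \<longrightarrow> g S = v (S - {N})"
      unfolding specht_def by (intro bexI)
    then show "v \<in> E" unfolding E_def by simp
  next
    have "\<exists>g\<in>specht (Suc N) (Suc y). \<forall>S. N \<in> S \<longrightarrow> g S = 0"
      by (rule bexI[OF _ specht_zero]) simp
    then show "(\<lambda>S. 0) \<in> E" unfolding E_def by simp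
  next
    fix g h assume "g \<in> E" "h \<in> E"
    then obtain g1 g2 where "g1 \<in> specht (Suc N) (Suc y)" "\<forall>S. N \<in> S \<longrightarrow> g1 S = g (S - {N})"
      "g2 \<in> specht (Suc N) (Suc y)" "\<forall>S. N \<in> S \<longrightarrow> g2 S = h (S - {N})"
      unfolding E_def by blast
    then show "(\<lambda>S. g S + h S) \<in> E" unfolding E_def
      by (intro CollectI bexI[of _ "\<lambda>S. g1 S + g2 S"] specht_add) auto
  next
    fix g c assume "g \<in> E"
    then obtain g1 where "g1 \<in> specht (Suc N) (Suc y)" "\<forall>S. N \<in> S \<longrightarrow> g1 S = g (S - {N})"
      unfolding E_def by blast
    then show "(\<lambda>S. c * g S) \<in> E" unfolding E_def
      by (intro CollectI bexI[of _ "\<lambda>S. c * g1 S"] specht_scale) auto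
  qed
  then show ?thesis unfolding E_def by blast
qed

lemma claimK:
  assumes "2 * x \<le> n" "wsp n x f" "Dop n f = (\<lambda>S. 0)"
  shows "f \<in> specht n x"
  using assms
proof (induction n arbitrary: x f)
  case 0
  then have "x = 0" by simp
  then show ?case using specht0 0 by simp
next
  case (Suc N)
  show ?case
  proof (cases x)
    case 0 then show ?thesis using specht0 Suc.prems by simp
  next
    case (Suc y)
    note x = this
    have y: "2 * y < N" using Suc.prems(1) x by simp
    define q where "q = (\<lambda>T. if T \<subseteq> {..<N} then f (insert N T) else 0)"
    have wq: "wsp N y q" unfolding wsp_def is_qvec_def
    proof (intro conjI allI impI)
      fix T :: "nat set" assume "\<not> T \<subseteq> {..<N}" then show "q T = 0" by (simp add: q_def)
    next
      fix T :: "nat set" assume c: "card T \<noteq> y"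
      show "q T = 0"
      proof (cases "T \<subseteq> {..<N}")
        case True
        then have "finite T" "N \<notin> T" using subset_lessThan_finite by auto
        then have "card (insert N T) \<noteq> x" using c x by simp
        then show ?thesis using Suc.prems(2) True by (simp add: q_def wsp_def)
      qed (simp add: q_def)
    qed
    have Dq: "Dop N q = (\<lambda>S. 0)"
    proof
      fix T show "Dop N q T = 0"
      proof (cases "T \<subseteq> {..<N}")
        case True
        have e: "{..<Suc N} - insert N T = {..<N} - T" by auto
        have "insert N T \<subseteq> {..<Suc N}" using True by auto
        then have "Dop (Suc N) f (insert N T) = (\<Sum>j\<in>{..<N} - T. f (insert j (insert N T)))"
          by (simp add: Dop_def e)
        moreover have "Dop N q T = (\<Sum>j\<in>{..<N} - T. f (insert N (insert j T)))"
          using True by (auto simp: Dop_def q_def intro!: sum.cong)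
        ultimately show ?thesis using Suc.prems(3) by (simp add: insert_commute)
      qed (simp add: Dop_def)
    qed
    have "q \<in> specht N y" using Suc.IH[OF _ wq Dq] y by simp
    then obtain g where g: "g \<in> specht (Suc N) x" "\<forall>S. N \<in> S \<longrightarrow> g S = q (S - {N})"
      using extend_specht[OF _ y] x by blast
    have wg: "wsp (Suc N) x g" and Dg: "Dop (Suc N) g = (\<lambda>S. 0)" using specht_wsp_D[OF g(1)] by auto
    have gf: "g S = f S" if "N \<in> S" for S
    proof (cases "S \<subseteq> {..<Suc N}")
      case True
      then have "S - {N} \<subseteq> {..<N}" by auto
      then show ?thesis using g(2) that by (simp add: q_def insert_absorb)
    next
      case False
      then show ?thesis using wg Suc.prems(2) by (simp add: wsp_def is_qvec_def)
    qed
    define r where "r = (\<lambda>S. f S - g S)"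
    have rN: "r S = 0" if "N \<in> S" for S using gf[OF that] by (simp add: r_def)
    have wr0: "wsp (Suc N) x r" unfolding r_def by (rule wsp_diff[OF Suc.prems(2) wg])
    have wr: "wsp N x r" unfolding wsp_def is_qvec_def
    proof (intro conjI allI impI)
      fix S :: "nat set" assume S: "\<not> S \<subseteq> {..<N}"
      show "r S = 0"
      proof (cases "N \<in> S")
        case True then show ?thesis using rN by simp
      next
        case False
        then have "\<not> S \<subseteq> {..<Suc N}" using S by (auto simp: less_Suc_eq)
        then show ?thesis using wr0 by (simp add: wsp_def is_qvec_def)
      qed
    next
      fix S :: "nat set" assume "card S \<noteq> x"
      then show "r S = 0" using wr0 by (simp add: wsp_def)
    qed
    have Dr: "Dop N r = (\<lambda>S. 0)"
    proof
      fix T show "Dop N r T = 0"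
      proof (cases "T \<subseteq> {..<N}")
        case True
        then have fin: "finite T" using subset_lessThan_finite by blast
        have e: "{..<Suc N} - T = insert N ({..<N} - T)" using True by auto
        have "Dop (Suc N) r T = r (insert N T) + (\<Sum>j\<in>{..<N} - T. r (insert j T))"
          using True by (simp add: Dop_def e subset_iff less_Suc_eq)
        moreover have "Dop (Suc N) r = (\<lambda>S. 0)" unfolding r_def by (simp add: Dop_diff Suc.prems(3) Dg)
        moreover have "Dop N r T = (\<Sum>j\<in>{..<N} - T. r (insert j T))" using True by (simp add: Dop_def)
        moreover have "r (insert N T) = 0" by (rule rN) simp
        ultimately show ?thesis by simp
      qed (simp add: Dop_def)
    qed
    show ?thesis
    proof (cases "2 * x \<le> N")
      case True
      then have "r \<in> specht N x" using Suc.IH[OF True wr Dr] by simp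
      then have "r \<in> specht (Suc N) x" using specht_mono[of N "Suc N" x] by auto
      then have "(\<lambda>S. r S + g S) \<in> specht (Suc N) x" by (rule specht_add[OF _ g(1)])
      then show ?thesis by (simp add: r_def)
    next
      case False
      have Tr: "Top N r = (\<lambda>S. cw N x * r S)"
        using Top_wsp[OF wr] Dr by (simp add: Uop_zero)
      have "r = (\<lambda>S. 0)"
      proof (rule eigen_zero[OF wr Tr])
        fix y' assume "y' \<le> x" "y' \<le> N - x"
        then show "cw N y' \<noteq> cw N x" using False Suc.prems(1) x by (intro cw_neq) auto
      qed
      then have "f = g" unfolding r_def by (simp add: fun_eq_iff)
      then show ?thesis using g(1) by simp
    qed
  qed
qed



lemma perm_subset_iff:
  assumes "\<tau> permutes {..<n}"
  shows "\<tau> ` S \<subseteq> {..<n} \<longleftrightarrow> S \<subseteq> {..<n}"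
  using permutes_in_image[OF assms] by auto

lemma perm_inv_image_eq:
  assumes "bij \<sigma>"
  shows "(inv \<sigma> ` S = X) \<longleftrightarrow> (S = \<sigma> ` X)"
proof
  assume "inv \<sigma> ` S = X"
  then show "S = \<sigma> ` X" using image_f_inv_f[OF bij_is_surj[OF assms]] by metis
next
  assume "S = \<sigma> ` X"
  then show "inv \<sigma> ` S = X" using image_inv_f_f[OF bij_is_inj[OF assms]] by metis
qed

lemma Uop_pact:
  assumes "\<sigma> permutes {..<n}"
  shows "Uop n (pact \<sigma> f) = pact \<sigma> (Uop n f)"
proof
  fix S
  let ?t = "inv \<sigma>"
  have t: "?t permutes {..<n}" by (rule permutes_inv[OF assms])
  have it: "inj ?t" by (rule permutes_inj[OF t])
  show "Uop n (pact \<sigma> f) S = pact \<sigma> (Uop n f) S"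
  proof (cases "S \<subseteq> {..<n}")
    case True
    then have "?t ` S \<subseteq> {..<n}" using perm_subset_iff[OF t] by simp
    then have "pact \<sigma> (Uop n f) S = (\<Sum>j\<in>?t ` S. f (?t ` S - {j}))"
      by (simp add: pact_def Uop_def)
    also have "\<dots> = (\<Sum>i\<in>S. f (?t ` S - {?t i}))"
      by (rule sum.reindex[OF inj_on_subset[OF it], unfolded comp_def]) simp
    also have "\<dots> = (\<Sum>i\<in>S. f (?t ` (S - {i})))"
      using image_set_diff[OF it, of S "{_}"] by simp
    finally show ?thesis using True by (simp add: pact_def Uop_def)
  next
    case False
    then have "\<not> ?t ` S \<subseteq> {..<n}" using perm_subset_iff[OF t] by simp
    then show ?thesis using False by (simp add: pact_def Uop_def)
  qed
qed

lemma qvec_pact: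
  assumes "\<sigma> permutes {..<n}" "is_qvec n f"
  shows "is_qvec n (pact \<sigma> f)"
  using assms(2) perm_subset_iff[OF permutes_inv[OF assms(1)]]
  unfolding is_qvec_def pact_def by simp

lemma Uop_pow_add: "(Uop n ^^ r) (\<lambda>S. f S + g S) = (\<lambda>S. (Uop n ^^ r) f S + (Uop n ^^ r) g S)"
  by (induction r) (simp_all add: Uop_add)
lemma Uop_pow_scale: "(Uop n ^^ r) (\<lambda>S. c * f S) = (\<lambda>S. c * (Uop n ^^ r) f S)"
  by (induction r) (simp_all add: Uop_scale)
lemma Uop_pow_pact: "\<sigma> permutes {..<n} \<Longrightarrow> (Uop n ^^ r) (pact \<sigma> f) = pact \<sigma> ((Uop n ^^ r) f)"
  by (induction r) (simp_all add: Uop_pact)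
lemma Uop_pow_qvec: "is_qvec n f \<Longrightarrow> is_qvec n ((Uop n ^^ r) f)"
  by (induction r) (simp_all add: qvec_Uop)

lemma equiv_Uop_pow: "equiv_map n x (Uop n ^^ r)"
  unfolding equiv_map_def
proof (intro conjI ballI allI impI)
  fix f assume "f \<in> specht n x"
  then show "is_qvec n ((Uop n ^^ r) f)" using specht_wsp_D wsp_qvec Uop_pow_qvec by blast
qed (simp_all add: Uop_pow_add Uop_pow_scale Uop_pow_pact)

section \<open>descent\<close>

lemma descent:
  assumes "2 * x \<le> n" "x \<le> w" "w \<le> n - x" "wsp n w v" "Top n v = (\<lambda>S. cw n x * v S)"
  shows "\<exists>h. wsp n x h \<and> Dop n h = (\<lambda>S. 0) \<and> v = (Uop n ^^ (w - x)) h"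
  using assms(2-5)
proof (induction w arbitrary: v)
  case 0
  then have x0: "x = 0" by simp
  then show ?case using 0 wsp0_Dop[of n v] by auto
next
  case (Suc w)
  have qv: "is_qvec n v" using Suc.prems(3) by (rule wsp_qvec)
  have wD: "wsp n w (Dop n v)" using wsp_Dop[OF Suc.prems(3)] .
  have TD: "Top n (Dop n v) = (\<lambda>S. cw n x * Dop n v S)"
    by (simp add: Top_Dop[OF qv] Suc.prems(4) Dop_scale)
  show ?case
  proof (cases "x = Suc w")
    case True
    have "Dop n v = (\<lambda>S. 0)"
    proof (rule eigen_zero[OF wD TD])
      fix y assume "y \<le> w" "y \<le> n - w"
      then show "cw n y \<noteq> cw n x" using True assms(1) by (intro cw_neq) auto
    qed
    then show ?thesis using True Suc.prems(3) by auto
  next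
    case False
    then have xw: "x \<le> w" "x < Suc w" using Suc.prems(1) by auto
    define \<mu> where "\<mu> = cw n (Suc w) - cw n x"
    have "x + Suc w \<le> n" using Suc.prems(2) assms(1) by linarith
    then have \<mu>0: "\<mu> \<noteq> 0" unfolding \<mu>_def using cw_neq[of x "Suc w" n] xw by auto
    have UD: "Uop n (Dop n v) = (\<lambda>S. \<mu> * v S)"
    proof
      fix S
      have "cw n x * v S = cw n (Suc w) * v S - Uop n (Dop n v) S"
        using fun_cong[OF Top_wsp[OF Suc.prems(3)], of S] fun_cong[OF Suc.prems(4), of S] by simp
      then show "Uop n (Dop n v) S = \<mu> * v S" unfolding \<mu>_def by (simp add: algebra_simps)
    qed
    define v' where "v' = (\<lambda>S. (1 / \<mu>) * Dop n v S)"
    have wv': "wsp n w v'" unfolding v'_def by (rule wsp_scale[OF wD])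
    have Tv': "Top n v' = (\<lambda>S. cw n x * v' S)" unfolding v'_def Top_scale TD by (simp add: fun_eq_iff)
    obtain h where h: "wsp n x h" "Dop n h = (\<lambda>S. 0)" "v' = (Uop n ^^ (w - x)) h"
      using Suc.IH[OF xw(1) _ wv' Tv'] Suc.prems(2) by auto
    have "Uop n v' = v" unfolding v'_def Uop_scale UD using \<mu>0 by (simp add: fun_eq_iff)
    then have "v = (Uop n ^^ Suc (w - x)) h" using h(3) by simp
    moreover have "Suc (w - x) = Suc w - x" using xw by simp
    ultimately show ?thesis using h by auto
  qed
qed

lemma iso_base: "equiv_map n x L \<Longrightarrow> f \<in> specht n x \<Longrightarrow> L f \<in> isotypic n x"
  unfolding isotypic_def by (rule cspan_base) (rule CollectI, intro exI conjI, rule refl, assumption+)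

lemma E_in_iso:
  assumes "2 * x \<le> n" "wsp n w v" "Top n v = (\<lambda>S. cw n x * v S)"
  shows "v \<in> isotypic n x"
proof (cases "x \<le> w \<and> w \<le> n - x")
  case True
  have "\<exists>h. wsp n x h \<and> Dop n h = (\<lambda>S. 0) \<and> v = (Uop n ^^ (w - x)) h"
    using True by (intro descent[OF assms(1) _ _ assms(2,3)]) simp_all
  then obtain h where h: "wsp n x h" "Dop n h = (\<lambda>S. 0)" "v = (Uop n ^^ (w - x)) h"
    by (elim exE conjE)
  have "h \<in> specht n x" by (rule claimK[OF assms(1) h(1,2)])
  then show ?thesis using iso_base[OF equiv_Uop_pow] h(3) by simp
next
  case False
  have "v = (\<lambda>S. 0)"
  proof (cases "w \<le> n")
    case True
    show ?thesis
    proof (rule eigen_zero[OF assms(2,3)])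
      fix y assume "y \<le> w" "y \<le> n - w"
      then show "cw n y \<noteq> cw n x" using False True assms(1) by (intro cw_neq) auto
    qed
  next
    case False then show ?thesis using wsp_big[OF assms(2)] by simp
  qed
  then show ?thesis unfolding isotypic_def by (simp add: cspan_zero)
qed



lemma transpose_image_in_out:
  assumes "i \<in> S" "j \<notin> S"
  shows "transpose i j ` S = insert j (S - {i})"
proof (rule set_eqI)
  fix x show "x \<in> transpose i j ` S \<longleftrightarrow> x \<in> insert j (S - {i})"
    using assms by (auto simp: in_transpose_image_iff Transposition.transpose_def)
qed

lemma swap_double_sum:
  fixes g :: "nat set \<Rightarrow> complex"
  assumes S: "S \<subseteq> {..<n}"
  shows "(\<Sum>i<n. \<Sum>j<n. g S - g (transpose i j ` S))
       = 2 * (\<Sum>i\<in>S. \<Sum>j\<in>{..<n} - S. g S - g (insert j (S - {i})))"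
proof -
  define h where "h i j = g S - g (transpose i j ` S)" for i j
  have h0: "h i j = 0" if "i \<in> S \<longleftrightarrow> j \<in> S" for i j
    using that unfolding h_def by simp
  have hs: "h i j = h j i" for i j unfolding h_def by (simp add: transpose_commute)
  have fin: "finite S" using S subset_lessThan_finite by blast
  have split: "(\<Sum>i<n. F i) = (\<Sum>i\<in>S. F i) + (\<Sum>i\<in>{..<n} - S. F i)" for F :: "nat \<Rightarrow> complex"
    using sum.subset_diff[OF S, of F] by simp
  have A: "(\<Sum>j<n. h i j) = (\<Sum>j\<in>{..<n} - S. h i j)" if "i \<in> S" for i
    using split[of "h i"] h0 that by simp
  have B: "(\<Sum>j<n. h i j) = (\<Sum>j\<in>S. h i j)" if "i \<notin> S" for i
    using split[of "h i"] h0 that by simp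
  have "(\<Sum>i<n. \<Sum>j<n. h i j) = (\<Sum>i\<in>S. \<Sum>j\<in>{..<n} - S. h i j) + (\<Sum>i\<in>{..<n} - S. \<Sum>j\<in>S. h i j)"
    using split[of "\<lambda>i. \<Sum>j<n. h i j"] A B by simp
  also have "(\<Sum>i\<in>{..<n} - S. \<Sum>j\<in>S. h i j) = (\<Sum>j\<in>S. \<Sum>i\<in>{..<n} - S. h i j)"
    by (rule sum.swap)
  also have "\<dots> = (\<Sum>i\<in>S. \<Sum>j\<in>{..<n} - S. h i j)" by (simp add: hs)
  finally have "(\<Sum>i<n. \<Sum>j<n. h i j) = 2 * (\<Sum>i\<in>S. \<Sum>j\<in>{..<n} - S. h i j)" by simp
  moreover have "(\<Sum>i\<in>S. \<Sum>j\<in>{..<n} - S. h i j) = (\<Sum>i\<in>S. \<Sum>j\<in>{..<n} - S. g S - g (insert j (S - {i})))"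
    unfolding h_def by (intro sum.cong refl) (simp add: transpose_image_in_out)
  ultimately show ?thesis unfolding h_def by simp
qed

lemma Top_swap2:
  assumes "is_qvec n g"
  shows "Top n g = (\<lambda>S. (1/2) * (\<Sum>i<n. \<Sum>j<n. g S - pact (transpose i j) g S))"
proof
  fix S
  show "Top n g S = (1/2) * (\<Sum>i<n. \<Sum>j<n. g S - pact (transpose i j) g S)"
  proof (cases "S \<subseteq> {..<n}")
    case True
    have fin: "finite S" using True subset_lessThan_finite by blast
    have cS: "card S \<le> n" using card_le_n[OF True] .
    have "(\<Sum>i<n. \<Sum>j<n. g S - pact (transpose i j) g S) = (\<Sum>i<n. \<Sum>j<n. g S - g (transpose i j ` S))"
      by (simp add: pact_def)
    also have "\<dots> = 2 * (\<Sum>i\<in>S. \<Sum>j\<in>{..<n} - S. g S - g (insert j (S - {i})))"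
      by (rule swap_double_sum[OF True])
    also have "(\<Sum>i\<in>S. \<Sum>j\<in>{..<n} - S. g S - g (insert j (S - {i})))
       = of_nat (card S) * of_nat (n - card S) * g S - (\<Sum>i\<in>S. \<Sum>j\<in>{..<n} - S. g (insert j (S - {i})))"
      using True fin by (simp add: sum_subtractf card_Diff_subset)
    finally have R: "(1/2) * (\<Sum>i<n. \<Sum>j<n. g S - pact (transpose i j) g S)
        = of_nat (card S) * of_nat (n - card S) * g S - (\<Sum>i\<in>S. \<Sum>j\<in>{..<n} - S. g (insert j (S - {i})))"
      by simp
    have "Top n g S = cw n (card S) * g S - (of_nat (card S) * g S + (\<Sum>i\<in>S. \<Sum>j\<in>{..<n} - S. g (insert j (S - {i}))))"
      using True by (simp add: Top_def Mul_apply UD_expand)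
    also have "\<dots> = of_nat (card S) * of_nat (n - card S) * g S - (\<Sum>i\<in>S. \<Sum>j\<in>{..<n} - S. g (insert j (S - {i})))"
      using cS by (simp add: cw_def of_nat_diff algebra_simps)
    finally show ?thesis using R by simp
  next
    case False
    have "pact (transpose i j) g S = 0" if "i < n" "j < n" for i j
    proof -
      have "transpose i j permutes {..<n}" using that by (intro permutes_swap_id) auto
      then have "\<not> transpose i j ` S \<subseteq> {..<n}" using perm_subset_iff False by blast
      then show ?thesis using assms by (simp add: pact_def is_qvec_def)
    qed
    moreover have "g S = 0" using assms False by (simp add: is_qvec_def)
    ultimately show ?thesis using False by (simp add: Top_def Mul_def Uop_def)
  qed
qed

abbreviation tp :: "nat \<times> nat \<Rightarrow> nat \<Rightarrow> nat" where
  "tp p \<equiv> transpose (fst p) (snd p)"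

lemma tp_permutes: "p \<in> {..<n} \<times> {..<n} \<Longrightarrow> tp p permutes {..<n}"
  by (intro permutes_swap_id) auto

lemma Top_swap:
  assumes "is_qvec n g"
  shows "Top n g = (\<lambda>S. \<Sum>p\<in>{..<n} \<times> {..<n}. (1/2) * (g S - pact (tp p) g S))"
proof
  fix S
  have "(\<Sum>i<n. \<Sum>j<n. g S - pact (transpose i j) g S) = (\<Sum>p\<in>{..<n} \<times> {..<n}. g S - pact (tp p) g S)"
    by (simp add: sum.cartesian_product case_prod_beta)
  then show "Top n g S = (\<Sum>p\<in>{..<n} \<times> {..<n}. (1/2) * (g S - pact (tp p) g S))"
    using fun_cong[OF Top_swap2[OF assms], of S] by (simp add: sum_distrib_left)
qed

section \<open>self-adjointness\<close>

lemma qinner_sum_right: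
  "finite P \<Longrightarrow> qinner n g (\<lambda>S. \<Sum>p\<in>P. c p * h p S) = (\<Sum>p\<in>P. c p * qinner n g (h p))"
  unfolding qinner_def by (simp add: sum_distrib_left sum.swap[of _ P] algebra_simps)

lemma qinner_sum_left:
  "finite P \<Longrightarrow> qinner n (\<lambda>S. \<Sum>p\<in>P. c p * h p S) f = (\<Sum>p\<in>P. cnj (c p) * qinner n (h p) f)"
  unfolding qinner_def by (simp add: sum_distrib_left sum_distrib_right sum.swap[of _ P] algebra_simps)

lemma qinner_diff_right: "qinner n g (\<lambda>S. f S - h S) = qinner n g f - qinner n g h"
  unfolding qinner_def by (simp add: sum_subtractf algebra_simps)
lemma qinner_diff_left: "qinner n (\<lambda>S. f S - h S) g = qinner n f g - qinner n h g"
  unfolding qinner_def by (simp add: sum_subtractf algebra_simps)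

lemma qinner_pact_tp:
  assumes "p \<in> {..<n} \<times> {..<n}"
  shows "qinner n g (pact (tp p) f) = qinner n (pact (tp p) g) f"
proof -
  let ?t = "tp p"
  have t: "?t permutes {..<n}" by (rule tp_permutes[OF assms])
  have inv: "?t ` (?t ` S) = S" for S by (simp add: image_comp)
  have "qinner n g (pact ?t f) = (\<Sum>S\<in>Pow {..<n}. cnj (g S) * f (?t ` S))"
    by (simp add: qinner_def pact_def)
  also have "\<dots> = (\<Sum>S\<in>Pow {..<n}. cnj (g (?t ` S)) * f S)"
    by (rule sum.reindex_bij_witness[of _ "(`) ?t" "(`) ?t"])
       (auto simp: inv perm_subset_iff[OF t])
  also have "\<dots> = qinner n (pact ?t g) f" by (simp add: qinner_def pact_def)
  finally show ?thesis .
qed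

lemma Top_selfadj:
  assumes "is_qvec n f" "is_qvec n g"
  shows "qinner n g (Top n f) = qinner n (Top n g) f"
proof -
  let ?P = "{..<n} \<times> {..<n}"
  have "qinner n g (Top n f) = (\<Sum>p\<in>?P. (1/2) * qinner n g (\<lambda>S. f S - pact (tp p) f S))"
    unfolding Top_swap[OF assms(1)] by (rule qinner_sum_right) simp
  also have "\<dots> = (\<Sum>p\<in>?P. (1/2) * (qinner n g f - qinner n (pact (tp p) g) f))"
    by (intro sum.cong refl) (simp add: qinner_diff_right qinner_pact_tp)
  also have "\<dots> = (\<Sum>p\<in>?P. cnj (1/2) * qinner n (\<lambda>S. g S - pact (tp p) g S) f)"
    by (intro sum.cong refl) (simp add: qinner_diff_left)
  also have "\<dots> = qinner n (Top n g) f"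
    unfolding Top_swap[OF assms(2)] by (rule qinner_sum_left[symmetric]) simp
  finally show ?thesis .
qed

lemma tableau_pact:
  assumes "\<sigma> permutes {..<n}" "is_tableau_cols n x a b"
  shows "is_tableau_cols n x (\<sigma> \<circ> a) (\<sigma> \<circ> b)"
proof -
  have inj: "inj \<sigma>" by (rule permutes_inj[OF assms(1)])
  have im: "\<sigma> ` {..<n} = {..<n}" by (rule permutes_image[OF assms(1)])
  have t: "inj_on a {..<x}" "inj_on b {..<x}" "a ` {..<x} \<inter> b ` {..<x} = {}"
    "a ` {..<x} \<subseteq> {..<n}" "b ` {..<x} \<subseteq> {..<n}"
    using assms(2) unfolding is_tableau_cols_def by auto
  have ij: "inj_on \<sigma> A" for A using inj by (rule inj_on_subset) simp
  show ?thesis unfolding is_tableau_cols_def image_comp[symmetric]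
  proof (intro conjI)
    show "inj_on (\<sigma> \<circ> a) {..<x}" by (rule comp_inj_on[OF t(1) ij])
    show "inj_on (\<sigma> \<circ> b) {..<x}" by (rule comp_inj_on[OF t(2) ij])
    show "\<sigma> ` a ` {..<x} \<inter> \<sigma> ` b ` {..<x} = {}" using t(3) image_Int[OF inj] by (metis image_empty)
    show "\<sigma> ` a ` {..<x} \<subseteq> {..<n}" using t(4) im by blast
    show "\<sigma> ` b ` {..<x} \<subseteq> {..<n}" using t(5) im by blast
  qed
qed

lemma pact_poly:
  assumes "\<sigma> permutes {..<n}"
  shows "pact \<sigma> (polytabloid x a b) = polytabloid x (\<sigma> \<circ> a) (\<sigma> \<circ> b)"
proof
  fix S
  have bij: "bij \<sigma>" by (rule permutes_bij[OF assms])
  show "pact \<sigma> (polytabloid x a b) S = polytabloid x (\<sigma> \<circ> a) (\<sigma> \<circ> b) S"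
    unfolding pact_def polytabloid_def
    by (intro sum.cong refl) (simp add: perm_inv_image_eq[OF bij] image_Un image_comp)
qed

lemma specht_pact:
  assumes "\<sigma> permutes {..<n}" "f \<in> specht n x"
  shows "pact \<sigma> f \<in> specht n x"
  using assms(2) unfolding specht_def
proof (rule cspan_closed[where P="\<lambda>f. pact \<sigma> f \<in> cspan {polytabloid x a b |a b. is_tableau_cols n x a b}"])
  fix v assume "v \<in> {polytabloid x a b |a b. is_tableau_cols n x a b}"
  then obtain a b where "v = polytabloid x a b" "is_tableau_cols n x a b" by blast
  then have "pact \<sigma> v = polytabloid x (\<sigma> \<circ> a) (\<sigma> \<circ> b)" "is_tableau_cols n x (\<sigma> \<circ> a) (\<sigma> \<circ> b)"
    using pact_poly[OF assms(1)] tableau_pact[OF assms(1)] by auto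
  then show "pact \<sigma> v \<in> cspan {polytabloid x a b |a b. is_tableau_cols n x a b}"
    by (intro cspan_base) blast
next
  show "pact \<sigma> (\<lambda>S. 0) \<in> cspan {polytabloid x a b |a b. is_tableau_cols n x a b}"
    by (simp add: pact_def cspan_zero)
next
  fix g h assume "pact \<sigma> g \<in> cspan {polytabloid x a b |a b. is_tableau_cols n x a b}"
    "pact \<sigma> h \<in> cspan {polytabloid x a b |a b. is_tableau_cols n x a b}"
  then show "pact \<sigma> (\<lambda>S. g S + h S) \<in> cspan {polytabloid x a b |a b. is_tableau_cols n x a b}"
    unfolding pact_def by (rule cspan_add)
next
  fix g c assume "pact \<sigma> g \<in> cspan {polytabloid x a b |a b. is_tableau_cols n x a b}"
  then show "pact \<sigma> (\<lambda>S. c * g S) \<in> cspan {polytabloid x a b |a b. is_tableau_cols n x a b}"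
    unfolding pact_def by (rule cspan_scale)
qed

lemma equiv_add: "equiv_map n x L \<Longrightarrow> f \<in> specht n x \<Longrightarrow> g \<in> specht n x \<Longrightarrow>
    L (\<lambda>S. f S + g S) = (\<lambda>S. L f S + L g S)"
  unfolding equiv_map_def by blast
lemma equiv_scale: "equiv_map n x L \<Longrightarrow> f \<in> specht n x \<Longrightarrow> L (\<lambda>S. c * f S) = (\<lambda>S. c * L f S)"
  unfolding equiv_map_def by blast
lemma equiv_pact: "equiv_map n x L \<Longrightarrow> \<sigma> permutes {..<n} \<Longrightarrow> f \<in> specht n x \<Longrightarrow> L (pact \<sigma> f) = pact \<sigma> (L f)"
  unfolding equiv_map_def by blast
lemma equiv_qvec: "equiv_map n x L \<Longrightarrow> f \<in> specht n x \<Longrightarrow> is_qvec n (L f)"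
  unfolding equiv_map_def by blast

lemma specht_sum:
  assumes "finite P" "\<And>p. p \<in> P \<Longrightarrow> g p \<in> specht n x"
  shows "(\<lambda>S. \<Sum>p\<in>P. c p * g p S) \<in> specht n x"
  using assms unfolding specht_def by (rule cspan_sum)

lemma L_zero:
  assumes "equiv_map n x L"
  shows "L (\<lambda>S. 0) = (\<lambda>S. 0)"
proof -
  have "L (\<lambda>S. 0 * (\<lambda>S. 0) S) = (\<lambda>S. 0 * L (\<lambda>S. 0) S)"
    by (rule equiv_scale[OF assms specht_zero])
  then show ?thesis by simp
qed

lemma L_sum:
  assumes "equiv_map n x L" "finite P" "\<And>p. p \<in> P \<Longrightarrow> g p \<in> specht n x"
  shows "L (\<lambda>S. \<Sum>p\<in>P. c p * g p S) = (\<lambda>S. \<Sum>p\<in>P. c p * L (g p) S)"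
  using assms(2,3)
proof (induction P rule: finite_induct)
  case empty then show ?case using L_zero[OF assms(1)] by simp
next
  case (insert q P)
  have s1: "(\<lambda>S. c q * g q S) \<in> specht n x" using insert.prems by (intro specht_scale) auto
  have s2: "(\<lambda>S. \<Sum>p\<in>P. c p * g p S) \<in> specht n x" using insert.prems by (intro specht_sum insert.hyps) auto
  have "L (\<lambda>S. \<Sum>p\<in>insert q P. c p * g p S) = L (\<lambda>S. (\<lambda>S. c q * g q S) S + (\<lambda>S. \<Sum>p\<in>P. c p * g p S) S)"
    using insert.hyps by simp
  also have "\<dots> = (\<lambda>S. L (\<lambda>S. c q * g q S) S + L (\<lambda>S. \<Sum>p\<in>P. c p * g p S) S)"
    by (rule equiv_add[OF assms(1) s1 s2])
  also have "L (\<lambda>S. c q * g q S) = (\<lambda>S. c q * L (g q) S)"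
    using insert.prems by (intro equiv_scale[OF assms(1)]) auto
  also have "L (\<lambda>S. \<Sum>p\<in>P. c p * g p S) = (\<lambda>S. \<Sum>p\<in>P. c p * L (g p) S)"
    using insert.IH insert.prems by blast
  finally show ?case using insert.hyps by simp
qed

lemma L_diff:
  assumes "equiv_map n x L" "f \<in> specht n x" "h \<in> specht n x"
  shows "L (\<lambda>S. f S - h S) = (\<lambda>S. L f S - L h S)"
proof -
  have s: "(\<lambda>S. (-1) * h S) \<in> specht n x" by (rule specht_scale[OF assms(3)])
  have "L (\<lambda>S. f S - h S) = L (\<lambda>S. f S + (\<lambda>S. (-1) * h S) S)" by simp
  also have "\<dots> = (\<lambda>S. L f S + L (\<lambda>S. (-1) * h S) S)"
    by (rule equiv_add[OF assms(1,2) s])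
  also have "L (\<lambda>S. (-1) * h S) = (\<lambda>S. (-1) * L h S)"
    by (rule equiv_scale[OF assms(1,3)])
  finally show ?thesis by simp
qed

lemma specht_eig:
  assumes "f \<in> specht n x"
  shows "Top n f = (\<lambda>S. cw n x * f S)"
  using specht_wsp_D[OF assms] Top_wsp[of n x f] by (simp add: Uop_zero)

lemma L_Top:
  assumes "equiv_map n x L" "f \<in> specht n x"
  shows "Top n (L f) = L (Top n f)"
proof -
  let ?P = "{..<n} \<times> {..<n}"
  have q: "is_qvec n (L f)" "is_qvec n f"
    using equiv_qvec[OF assms] specht_wsp_D[OF assms(2)] wsp_qvec by blast+
  have sp: "(\<lambda>S. f S - pact (tp p) f S) \<in> specht n x" if "p \<in> ?P" for p
    using specht_diff[OF assms(2) specht_pact[OF tp_permutes[OF that] assms(2)]] .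
  have Lp: "L (\<lambda>S. f S - pact (tp p) f S) = (\<lambda>S. L f S - pact (tp p) (L f) S)" if "p \<in> ?P" for p
  proof -
    have "L (pact (tp p) f) = pact (tp p) (L f)"
      by (rule equiv_pact[OF assms(1) tp_permutes[OF that] assms(2)])
    then show ?thesis
      using L_diff[OF assms(1,2) specht_pact[OF tp_permutes[OF that] assms(2)]] by simp
  qed
  have "L (Top n f) = (\<lambda>S. \<Sum>p\<in>?P. (1/2) * L (\<lambda>S. f S - pact (tp p) f S) S)"
    unfolding Top_swap[OF q(2)] by (rule L_sum[OF assms(1)]) (use sp in auto)
  also have "\<dots> = (\<lambda>S. \<Sum>p\<in>?P. (1/2) * (L f S - pact (tp p) (L f) S))"
    using Lp by (intro ext sum.cong refl) simp
  also have "\<dots> = Top n (L f)" by (rule Top_swap[OF q(1), symmetric])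
  finally show ?thesis by simp
qed

lemma iso_eig:
  assumes "v \<in> isotypic n x"
  shows "is_qvec n v \<and> Top n v = (\<lambda>S. cw n x * v S)"
  using assms unfolding isotypic_def
proof (rule cspan_closed[where P="\<lambda>v. is_qvec n v \<and> Top n v = (\<lambda>S. cw n x * v S)"])
  fix v assume "v \<in> {L f |L f. equiv_map n x L \<and> f \<in> specht n x}"
  then obtain L f where v: "v = L f" and L: "equiv_map n x L" and f: "f \<in> specht n x" by blast
  have "is_qvec n (L f)" by (rule equiv_qvec[OF L f])
  moreover have "Top n (L f) = (\<lambda>S. cw n x * L f S)"
    using L_Top[OF L f] specht_eig[OF f] equiv_scale[OF L f] by simp
  ultimately show "is_qvec n v \<and> Top n v = (\<lambda>S. cw n x * v S)" using v by simp
next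
  show "is_qvec n (\<lambda>S. 0) \<and> Top n (\<lambda>S. 0) = (\<lambda>S. cw n x * 0)" by (simp add: qvec_zero Top_zero)
next
  fix g h assume "is_qvec n g \<and> Top n g = (\<lambda>S. cw n x * g S)" "is_qvec n h \<and> Top n h = (\<lambda>S. cw n x * h S)"
  then show "is_qvec n (\<lambda>S. g S + h S) \<and> Top n (\<lambda>S. g S + h S) = (\<lambda>S. cw n x * (g S + h S))"
    by (simp add: qvec_add Top_add algebra_simps)
next
  fix g c assume "is_qvec n g \<and> Top n g = (\<lambda>S. cw n x * g S)"
  then show "is_qvec n (\<lambda>S. c * g S) \<and> Top n (\<lambda>S. c * g S) = (\<lambda>S. cw n x * (c * g S))"
    by (simp add: qvec_scale Top_scale algebra_simps)
qed



lemma qinner_self_zero: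
  assumes "is_qvec n d" "qinner n d d = 0"
  shows "d = (\<lambda>S. 0)"
proof
  fix S
  have e: "cnj (d T) * d T = complex_of_real ((Re (d T))\<^sup>2 + (Im (d T))\<^sup>2)" for T
    using complex_mult_cnj[of "d T"] by (simp add: mult.commute)
  have "(\<Sum>T\<in>Pow {..<n}. (Re (d T))\<^sup>2 + (Im (d T))\<^sup>2) = Re (qinner n d d)"
    unfolding qinner_def e by simp
  then have z: "(\<Sum>T\<in>Pow {..<n}. (Re (d T))\<^sup>2 + (Im (d T))\<^sup>2) = 0" using assms(2) by simp
  show "d S = 0"
  proof (cases "S \<subseteq> {..<n}")
    case True
    have "(Re (d S))\<^sup>2 + (Im (d S))\<^sup>2 = 0"
      using z True by (subst (asm) sum_nonneg_eq_0_iff) auto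
    then show ?thesis by (simp add: complex_eq_iff add_nonneg_eq_0_iff)
  next
    case False then show ?thesis using assms(1) by (simp add: is_qvec_def)
  qed
qed

lemma orth_proj_char:
  assumes "u \<in> U" "\<And>w. w \<in> U \<Longrightarrow> qinner n w (\<lambda>S. v S - u S) = 0"
    "\<And>w. w \<in> U \<Longrightarrow> is_qvec n w" "\<And>a b. a \<in> U \<Longrightarrow> b \<in> U \<Longrightarrow> (\<lambda>S. a S - b S) \<in> U"
  shows "orth_proj n U v = u"
  unfolding orth_proj_def
proof (rule the_equality)
  show "u \<in> U \<and> (\<forall>w\<in>U. qinner n w (\<lambda>S. v S - u S) = 0)" using assms(1,2) by blast
next
  fix u' assume u': "u' \<in> U \<and> (\<forall>w\<in>U. qinner n w (\<lambda>S. v S - u' S) = 0)"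
  define d where "d = (\<lambda>S. u' S - u S)"
  have dU: "d \<in> U" unfolding d_def using assms(4) u' assms(1) by blast
  have "qinner n d (\<lambda>S. (v S - u S) - (v S - u' S)) = 0"
    using assms(2)[OF dU] u' dU by (simp add: qinner_diff_right)
  moreover have "(\<lambda>S. (v S - u S) - (v S - u' S)) = d" unfolding d_def by (simp add: fun_eq_iff)
  ultimately have "qinner n d d = 0" by simp
  then have "d = (\<lambda>S. 0)" using qinner_self_zero assms(3)[OF dU] by blast
  then show "u' = u" unfolding d_def by (simp add: fun_eq_iff)
qed

lemma qinner_scale_right: "qinner n g (\<lambda>S. c * f S) = c * qinner n g f"
  unfolding qinner_def by (simp add: sum_distrib_left algebra_simps)

lemma qinner_sum_right1:
  "finite P \<Longrightarrow> qinner n g (\<lambda>S. \<Sum>p\<in>P. h p S) = (\<Sum>p\<in>P. qinner n g (h p))"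
  using qinner_sum_right[of P n g "\<lambda>_. 1" h] by simp

lemma cnj_cw: "cnj (cw n x) = cw n x" by (simp add: cw_real)

lemma eig_orth:
  assumes "is_qvec n f" "is_qvec n g" "Top n f = (\<lambda>S. cw n y * f S)" "Top n g = (\<lambda>S. cw n x * g S)"
    "cw n x \<noteq> cw n y"
  shows "qinner n g f = 0"
proof -
  have "cw n y * qinner n g f = qinner n g (Top n f)" by (simp add: assms(3) qinner_scale_right)
  also have "\<dots> = qinner n (Top n g) f" by (rule Top_selfadj[OF assms(1,2)])
  also have "\<dots> = cw n x * qinner n g f"
    unfolding assms(4) qinner_def by (simp add: cnj_cw sum_distrib_left algebra_simps)
  finally show ?thesis using assms(5) by simp
qed

lemma cw_inj_half:
  assumes "x \<le> n div 2" "y \<le> n div 2" "x \<noteq> y"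
  shows "cw n x \<noteq> cw n y"
proof -
  have h: "2 * (n div 2) \<le> n" by simp
  show ?thesis
  proof (cases "y < x")
    case True
    then have "x + y \<le> n" using assms(1,2) h by linarith
    then show ?thesis using True cw_neq[of y x n] by auto
  next
    case False then have "x < y" using assms by simp
    then have "x + y \<le> n" using assms(1,2) h by linarith
    then show ?thesis using \<open>x < y\<close> cw_neq[of x y n] by auto
  qed
qed

lemma isotypic_diff: "a \<in> isotypic n x \<Longrightarrow> b \<in> isotypic n x \<Longrightarrow> (\<lambda>S. a S - b S) \<in> isotypic n x"
  unfolding isotypic_def by (rule cspan_diff)

lemma main_decomp:
  fixes v :: qvec
  assumes "wsp n w v" "w \<le> n"
  shows "\<exists>F. (\<forall>x\<le>n div 2. F x \<in> isotypic n x \<and> wsp n w (F x) \<and> Top n (F x) = (\<lambda>S. cw n x * F x S))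
           \<and> v = (\<lambda>S. \<Sum>x\<le>n div 2. F x S)"
proof -
  let ?r = "min w (n - w)"
  have r: "?r \<le> n div 2" by auto
  let ?cs = "map (cw n) [0..<Suc ?r]"
  have inj: "inj_on (cw n) {0..<Suc ?r}"
    using cw_inj_half r by (auto simp: inj_on_def) (meson less_Suc_eq_le order_trans)
  have dist: "distinct ?cs" unfolding distinct_map set_upt using inj by simp
  obtain g where g: "\<forall>c. wsp n w (g c) \<and> Top n (g c) = (\<lambda>S. c * g c S)"
    "v = (\<lambda>S. \<Sum>c\<in>set ?cs. g c S)"
    using eig_decomp[OF dist assms(1) poly_all[OF assms(2,1)]] by blast
  define F where "F x = (if x \<le> ?r then g (cw n x) else (\<lambda>S. 0))" for x
  have props: "F x \<in> isotypic n x \<and> wsp n w (F x) \<and> Top n (F x) = (\<lambda>S. cw n x * F x S)"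
    if "x \<le> n div 2" for x
  proof -
    have w: "wsp n w (F x)" and T: "Top n (F x) = (\<lambda>S. cw n x * F x S)"
      unfolding F_def using g(1) by (auto simp: wsp_zero Top_zero)
    have "2 * x \<le> n" using that by simp
    then show ?thesis using E_in_iso[OF _ w T] w T by simp
  qed
  have "v = (\<lambda>S. \<Sum>x\<le>n div 2. F x S)"
  proof
    fix S
    have "(\<Sum>c\<in>set ?cs. g c S) = (\<Sum>c\<in>cw n ` {0..<Suc ?r}. g c S)"
      unfolding set_map set_upt by (rule refl)
    also have "\<dots> = (\<Sum>x\<in>{0..<Suc ?r}. g (cw n x) S)" by (rule sum.reindex[OF inj, unfolded comp_def])
    also have "\<dots> = (\<Sum>x\<in>{0..<Suc ?r}. F x S)" by (intro sum.cong refl) (auto simp: F_def)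
    also have "\<dots> = (\<Sum>x\<le>n div 2. F x S)"
      by (rule sum.mono_neutral_left) (use r in \<open>auto simp: F_def\<close>)
    finally show "v S = (\<Sum>x\<le>n div 2. F x S)" using g(2) by simp
  qed
  then show ?thesis using props by blast
qed

lemma proj_decomp:
  assumes "\<And>x. x \<le> n div 2 \<Longrightarrow> F x \<in> isotypic n x"
    "\<And>x. x \<le> n div 2 \<Longrightarrow> Top n (F x) = (\<lambda>S. cw n x * F x S)"
    "\<And>x. x \<le> n div 2 \<Longrightarrow> is_qvec n (F x)"
    "v = (\<lambda>S. \<Sum>x\<le>n div 2. F x S)" "x \<le> n div 2"
  shows "orth_proj n (isotypic n x) v = F x"
proof (rule orth_proj_char)
  show "F x \<in> isotypic n x" using assms(1,5) .
  show "is_qvec n w" if "w \<in> isotypic n x" for w using iso_eig[OF that] by blast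
  show "(\<lambda>S. a S - b S) \<in> isotypic n x" if "a \<in> isotypic n x" "b \<in> isotypic n x" for a b
    using isotypic_diff[OF that] .
  fix w assume wI: "w \<in> isotypic n x"
  have "(\<lambda>S. v S - F x S) = (\<lambda>S. \<Sum>y\<in>{..n div 2} - {x}. F y S)"
    unfolding assms(4) using assms(5) by (simp add: sum_diff1 fun_eq_iff)
  then have "qinner n w (\<lambda>S. v S - F x S) = (\<Sum>y\<in>{..n div 2} - {x}. qinner n w (F y))"
    by (simp add: qinner_sum_right1)
  also have "\<dots> = 0"
  proof (rule sum.neutral, rule ballI)
    fix y assume y: "y \<in> {..n div 2} - {x}"
    show "qinner n w (F y) = 0"
      using eig_orth[OF assms(3) _ assms(2)] iso_eig[OF wI] cw_inj_half[of x n y] y assms(5) by auto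
  qed
  finally show "qinner n w (\<lambda>S. v S - F x S) = 0" .
qed



definition validS :: "nat \<Rightarrow> nat \<Rightarrow> nat \<Rightarrow> nat \<Rightarrow> nat set \<Rightarrow> bool" where
  "validS n m k l S \<longleftrightarrow> S \<subseteq> {..<n} \<and> {..<l} \<subseteq> S \<and> S \<inter> {l..<k} = {} \<and> card (S \<inter> {k..<n}) = m - l"

definition cX :: "nat \<Rightarrow> nat \<Rightarrow> nat \<Rightarrow> nat \<Rightarrow> complex" where
  "cX n m k l = complex_of_real (1 / sqrt (real ((n - k) choose (m - l))))"

lemma Xi_eq: "Xi n m k l S = (if validS n m k l S then cX n m k l else 0)"
  unfolding Xi_def validS_def cX_def by simp

lemma valid_split:
  assumes "validS n m k l S" "l \<le> k"
  shows "S = {..<l} \<union> (S \<inter> {k..<n})"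
proof
  show "S \<subseteq> {..<l} \<union> (S \<inter> {k..<n})"
  proof
    fix s assume s: "s \<in> S"
    have "s < n" using s assms(1) unfolding validS_def by auto
    moreover have "s \<notin> {l..<k}" using s assms(1) unfolding validS_def by auto
    ultimately show "s \<in> {..<l} \<union> (S \<inter> {k..<n})" using s by auto
  qed
  show "{..<l} \<union> (S \<inter> {k..<n}) \<subseteq> S" using assms(1) unfolding validS_def by auto
qed

lemma valid_card:
  assumes "validS n m k l S" "l \<le> k"
  shows "card S = l + (m - l)"
proof -
  have "card S = card ({..<l} \<union> (S \<inter> {k..<n}))" using valid_split[OF assms] by simp
  also have "\<dots> = card {..<l} + card (S \<inter> {k..<n})"
    using assms(2) by (intro card_Un_disjoint) auto
  also have "\<dots> = l + (m - l)" using assms(1) unfolding validS_def by simp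
  finally show ?thesis .
qed

lemma Xi_wsp:
  assumes "l \<le> m" "l \<le> k"
  shows "wsp n m (Xi n m k l)"
  unfolding wsp_def is_qvec_def Xi_eq
  using valid_card[OF _ assms(2), of n m] assms(1) by (auto simp: validS_def)

lemma cnj_cX: "cnj (cX n m k l) = cX n m k l" by (simp add: cX_def)

lemma valid_image:
  assumes "l \<le> k" "k \<le> n"
  shows "{S \<in> Pow {..<n}. validS n m k l S} = (\<lambda>R. {..<l} \<union> R) ` {R. R \<subseteq> {k..<n} \<and> card R = m - l}"
proof
  show "{S \<in> Pow {..<n}. validS n m k l S} \<subseteq> (\<lambda>R. {..<l} \<union> R) ` {R. R \<subseteq> {k..<n} \<and> card R = m - l}"
  proof
    fix S assume "S \<in> {S \<in> Pow {..<n}. validS n m k l S}"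
    then have v: "validS n m k l S" by simp
    then have "S = {..<l} \<union> (S \<inter> {k..<n})" using valid_split assms by blast
    moreover have "S \<inter> {k..<n} \<in> {R. R \<subseteq> {k..<n} \<and> card R = m - l}" using v by (simp add: validS_def)
    ultimately show "S \<in> (\<lambda>R. {..<l} \<union> R) ` {R. R \<subseteq> {k..<n} \<and> card R = m - l}" by blast
  qed
next
  show "(\<lambda>R. {..<l} \<union> R) ` {R. R \<subseteq> {k..<n} \<and> card R = m - l} \<subseteq> {S \<in> Pow {..<n}. validS n m k l S}"
  proof
    fix S assume "S \<in> (\<lambda>R. {..<l} \<union> R) ` {R. R \<subseteq> {k..<n} \<and> card R = m - l}"
    then obtain R where R: "R \<subseteq> {k..<n}" "card R = m - l" "S = {..<l} \<union> R" by blast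
    have "({..<l} \<union> R) \<inter> {k..<n} = R" using R(1) assms(1) by auto
    moreover have "({..<l} \<union> R) \<inter> {l..<k} = {}" using R(1) by auto
    moreover have "{..<l} \<union> R \<subseteq> {..<n}" using R(1) assms by auto
    ultimately show "S \<in> {S \<in> Pow {..<n}. validS n m k l S}" using R by (simp add: validS_def)
  qed
qed

lemma card_valid:
  assumes "l \<le> k" "k \<le> n"
  shows "card {S \<in> Pow {..<n}. validS n m k l S} = (n - k) choose (m - l)"
proof -
  have inj: "inj_on (\<lambda>R. {..<l} \<union> R) {R. R \<subseteq> {k..<n} \<and> card R = m - l}"
  proof (rule inj_onI)
    fix R1 R2 assume "R1 \<in> {R. R \<subseteq> {k..<n} \<and> card R = m - l}" "R2 \<in> {R. R \<subseteq> {k..<n} \<and> card R = m - l}"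
      "{..<l} \<union> R1 = {..<l} \<union> R2"
    then have "({..<l} \<union> R1) \<inter> {k..<n} = ({..<l} \<union> R2) \<inter> {k..<n}" "R1 \<subseteq> {k..<n}" "R2 \<subseteq> {k..<n}" by auto
    moreover have "({..<l} \<union> R) \<inter> {k..<n} = R" if "R \<subseteq> {k..<n}" for R using that assms(1) by auto
    ultimately show "R1 = R2" by metis
  qed
  have "card {S \<in> Pow {..<n}. validS n m k l S} = card {R. R \<subseteq> {k..<n} \<and> card R = m - l}"
    unfolding valid_image[OF assms] by (rule card_image[OF inj])
  also have "\<dots> = (n - k) choose (m - l)" using n_subsets[of "{k..<n}" "m - l"] by simp
  finally show ?thesis .
qed

lemma Xi_norm:
  assumes "l \<le> k" "k \<le> n" "m - l \<le> n - k"
  shows "qinner n (Xi n m k l) (Xi n m k l) = 1"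
proof -
  let ?C = "real ((n - k) choose (m - l))"
  have Cpos: "?C > 0" using assms(3) by simp
  have cc: "cX n m k l * cX n m k l = complex_of_real (1 / ?C)"
    unfolding cX_def of_real_mult[symmetric] using Cpos by (simp add: real_sqrt_mult_self)
  have "qinner n (Xi n m k l) (Xi n m k l) = (\<Sum>S\<in>Pow {..<n}. if validS n m k l S then cX n m k l * cX n m k l else 0)"
    unfolding qinner_def Xi_eq by (intro sum.cong refl) (simp add: cnj_cX)
  also have "\<dots> = (\<Sum>S\<in>{S \<in> Pow {..<n}. validS n m k l S}. cX n m k l * cX n m k l)"
    by (rule sum.inter_filter[symmetric]) simp
  also have "\<dots> = of_nat ((n - k) choose (m - l)) * complex_of_real (1 / ?C)"
    using card_valid[OF assms(1,2)] cc by simp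
  also have "\<dots> = 1" using Cpos by simp
  finally show ?thesis .
qed

lemma inner_sum_Xi:
  assumes v: "validS n m k l S" and lk: "l \<le> k" and i: "i \<in> S"
  shows "(\<Sum>j\<in>{..<n} - S. Xi n m k l (insert j (S - {i})))
         = (if k \<le> i then of_nat (n - k - (m - l)) * cX n m k l else 0)"
proof -
  have Sn: "S \<subseteq> {..<n}" and lS: "{..<l} \<subseteq> S" and Slk: "S \<inter> {l..<k} = {}"
    and cS: "card (S \<inter> {k..<n}) = m - l" using v unfolding validS_def by auto
  have fin: "finite S" using Sn subset_lessThan_finite by blast
  show ?thesis
  proof (cases "k \<le> i")
    case False
    then have il: "i < l" using i Slk by (cases "i < l") auto
    have "\<not> validS n m k l (insert j (S - {i}))" if "j \<in> {..<n} - S" for j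
      using that il i unfolding validS_def by auto
    then show ?thesis using False by (simp add: Xi_eq)
  next
    case True
    have iln: "l \<le> i" "i < n" using True lk i Sn by auto
    have val: "validS n m k l (insert j (S - {i})) \<longleftrightarrow> k \<le> j" if j: "j \<in> {..<n} - S" for j
    proof
      assume "validS n m k l (insert j (S - {i}))"
      then have "insert j (S - {i}) \<inter> {l..<k} = {}" "{..<l} \<subseteq> insert j (S - {i})" unfolding validS_def by auto
      moreover have "l \<le> j" using j lS by (meson DiffD2 le_less_linear lessThan_iff subsetD)
      ultimately show "k \<le> j" by (cases "k \<le> j") auto
    next
      assume kj: "k \<le> j"
      have e: "insert j (S - {i}) \<inter> {k..<n} = insert j ((S \<inter> {k..<n}) - {i})" using j kj by auto
      have "card (insert j ((S \<inter> {k..<n}) - {i})) = card (S \<inter> {k..<n}) - 1 + 1"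
        using j fin i True iln by (simp add: card_Diff_singleton)
      moreover have "card (S \<inter> {k..<n}) \<ge> 1"
        using fin i True iln by (metis One_nat_def Suc_leI card_gt_0_iff finite_Int IntI atLeastLessThan_iff emptyE)
      ultimately have "card (insert j (S - {i}) \<inter> {k..<n}) = m - l" using e cS by simp
      moreover have "insert j (S - {i}) \<subseteq> {..<n}" using j Sn by auto
      moreover have "{..<l} \<subseteq> insert j (S - {i})" using lS iln by auto
      moreover have "insert j (S - {i}) \<inter> {l..<k} = {}" using Slk kj by auto
      ultimately show "validS n m k l (insert j (S - {i}))" unfolding validS_def by auto
    qed
    have "(\<Sum>j\<in>{..<n} - S. Xi n m k l (insert j (S - {i})))
        = (\<Sum>j\<in>{..<n} - S. if k \<le> j then cX n m k l else 0)"
      by (intro sum.cong refl) (simp add: Xi_eq val)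
    also have "\<dots> = (\<Sum>j\<in>{j \<in> {..<n} - S. k \<le> j}. cX n m k l)"
      by (rule sum.inter_filter[symmetric]) simp
    also have "{j \<in> {..<n} - S. k \<le> j} = {k..<n} - (S \<inter> {k..<n})" by auto
    also have "(\<Sum>j\<in>{k..<n} - (S \<inter> {k..<n}). cX n m k l) = of_nat ((n - k) - (m - l)) * cX n m k l"
    proof -
      have "card ({k..<n} - (S \<inter> {k..<n})) = card {k..<n} - card (S \<inter> {k..<n})"
        by (rule card_Diff_subset) auto
      then show ?thesis using cS by simp
    qed
    finally show ?thesis using True by simp
  qed
qed

lemma Xi_Top_valid:
  assumes v: "validS n m k l S" and lm: "l \<le> m" and lk: "l \<le> k"
  shows "Top n (Xi n m k l) S = (cw n m - of_nat m - of_nat (m - l) * of_nat (n - k - (m - l))) * Xi n m k l S"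
proof -
  have Sn: "S \<subseteq> {..<n}" using v unfolding validS_def by auto
  have fin: "finite S" using Sn subset_lessThan_finite by blast
  have cS: "card S = m" using valid_card[OF v lk] lm by simp
  have ck: "card {i \<in> S. k \<le> i} = m - l"
  proof -
    have "{i \<in> S. k \<le> i} = S \<inter> {k..<n}" using Sn by auto
    then show ?thesis using v unfolding validS_def by simp
  qed
  have "(\<Sum>i\<in>S. \<Sum>j\<in>{..<n} - S. Xi n m k l (insert j (S - {i})))
      = (\<Sum>i\<in>S. if k \<le> i then of_nat (n - k - (m - l)) * cX n m k l else 0)"
    by (intro sum.cong refl) (rule inner_sum_Xi[OF v lk])
  also have "\<dots> = (\<Sum>i\<in>{i \<in> S. k \<le> i}. of_nat (n - k - (m - l)) * cX n m k l)"
    by (rule sum.inter_filter[symmetric]) (rule fin)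
  also have "\<dots> = of_nat (m - l) * of_nat (n - k - (m - l)) * cX n m k l" using ck by simp
  finally have in2: "(\<Sum>i\<in>S. \<Sum>j\<in>{..<n} - S. Xi n m k l (insert j (S - {i})))
      = of_nat (m - l) * of_nat (n - k - (m - l)) * cX n m k l" .
  have XS: "Xi n m k l S = cX n m k l" using v by (simp add: Xi_eq)
  show ?thesis
    using Sn by (simp add: Top_def Mul_apply UD_expand cS in2 XS algebra_simps)
qed

lemma Xi_TopInner:
  assumes "l \<le> m" "l \<le> k" "k \<le> n" "m - l \<le> n - k"
  shows "qinner n (Xi n m k l) (Top n (Xi n m k l)) = cw n m - of_nat m - of_nat (m - l) * of_nat (n - k - (m - l))"
proof -
  let ?K = "cw n m - of_nat m - of_nat (m - l) * of_nat (n - k - (m - l))"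
  have "qinner n (Xi n m k l) (Top n (Xi n m k l)) = qinner n (Xi n m k l) (\<lambda>S. ?K * Xi n m k l S)"
    unfolding qinner_def
  proof (intro sum.cong refl)
    fix S show "cnj (Xi n m k l S) * Top n (Xi n m k l) S = cnj (Xi n m k l S) * (?K * Xi n m k l S)"
      by (cases "validS n m k l S") (simp_all add: Xi_Top_valid assms(1,2), simp add: Xi_eq)
  qed
  also have "\<dots> = ?K" by (simp add: qinner_scale_right Xi_norm assms(2-4))
  finally show ?thesis .
qed



theorem theorem4p12:
  fixes n m k l :: nat
  assumes "n \<ge> 1" and "m \<le> n" and "k \<le> n"
    and "int m + int k - int n \<le> int l" and "l \<le> min m k"
  shows "VX_p n m k l / real n ^ 2 =
           EX_p n m k l / real n * (1 - EX_p n m k l / real n) + EX_p n m k l / real n ^ 2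
           - (real m * (real n - real m) - (real m - real l) * (real n - real m - real k + real l))
             / real n ^ 2"
proof -
  have lm: "l \<le> m" and lk: "l \<le> k" using assms(5) by auto
  have hML: "m - l \<le> n - k" using assms(3,4) lm by linarith
  let ?Xi = "Xi n m k l"
  let ?p = "\<lambda>x. pdist x n m k l"
  let ?I = "{..n div 2}"
  have wX: "wsp n m ?Xi" by (rule Xi_wsp[OF lm lk])
  obtain F where F: "\<forall>x\<le>n div 2. F x \<in> isotypic n x \<and> wsp n m (F x) \<and> Top n (F x) = (\<lambda>S. cw n x * F x S)"
    and XF: "?Xi = (\<lambda>S. \<Sum>x\<le>n div 2. F x S)"
    using main_decomp[OF wX assms(2)] by blast
  have proj: "orth_proj n (isotypic n x) ?Xi = F x" if "x \<le> n div 2" for x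
    using F wsp_qvec that by (intro proj_decomp[OF _ _ _ XF]) auto
  have p: "?p x = Re (qinner n ?Xi (F x))" if "x \<le> n div 2" for x
    unfolding pdist_def proj[OF that] ..
  have A: "(\<Sum>x\<in>?I. ?p x) = 1"
  proof -
    have "(\<Sum>x\<in>?I. ?p x) = Re (\<Sum>x\<in>?I. qinner n ?Xi (F x))" using p by simp
    also have "(\<Sum>x\<in>?I. qinner n ?Xi (F x)) = qinner n ?Xi ?Xi"
      by (subst (2) XF) (simp add: qinner_sum_right1)
    finally show ?thesis using Xi_norm[OF lk assms(3) hML] by simp
  qed
  define Kr where "Kr = real m * (real n - real m) - (real m - real l) * (real n - real m - real k + real l)"
  have B: "(\<Sum>x\<in>?I. (real x * (real n - real x + 1)) * ?p x) = Kr"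
  proof -
    have "(\<Sum>x\<in>?I. (real x * (real n - real x + 1)) * ?p x) = Re (\<Sum>x\<in>?I. qinner n ?Xi (Top n (F x)))"
    proof -
      have "(real x * (real n - real x + 1)) * ?p x = Re (qinner n ?Xi (Top n (F x)))" if "x \<in> ?I" for x
        using that F p[of x] by (simp add: qinner_scale_right cw_real)
      then show ?thesis by simp
    qed
    also have "(\<Sum>x\<in>?I. qinner n ?Xi (Top n (F x))) = qinner n ?Xi (Top n ?Xi)"
      by (subst (3) XF) (simp add: Top_sum qinner_sum_right1)
    also have "\<dots> = cw n m - of_nat m - of_nat (m - l) * of_nat (n - k - (m - l))"
      by (rule Xi_TopInner[OF lm lk assms(3) hML])
    finally show ?thesis unfolding Kr_def using lm hML assms(2,3)
      by (simp add: cw_real of_nat_diff algebra_simps)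
  qed
  define E where "E = EX_p n m k l"
  have Edef: "E = (\<Sum>x\<in>?I. real x * ?p x)" unfolding E_def EX_p_def by simp
  have C: "(\<Sum>x\<in>?I. real x ^ 2 * ?p x) = (real n + 1) * E - Kr"
  proof -
    have "(\<Sum>x\<in>?I. (real x * (real n - real x + 1)) * ?p x)
        = (real n + 1) * (\<Sum>x\<in>?I. real x * ?p x) - (\<Sum>x\<in>?I. real x ^ 2 * ?p x)"
      by (simp add: sum_distrib_left sum_subtractf[symmetric] power2_eq_square algebra_simps)
    then show ?thesis using B Edef by simp
  qed
  have V: "VX_p n m k l = (\<Sum>x\<in>?I. real x ^ 2 * ?p x) - 2 * E * E + E ^ 2 * (\<Sum>x\<in>?I. ?p x)"
  proof -
    have "VX_p n m k l = (\<Sum>x\<in>?I. real x ^ 2 * ?p x - 2 * E * (real x * ?p x) + E ^ 2 * ?p x)"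
      unfolding VX_p_def E_def[symmetric] by (intro sum.cong refl) (simp add: power2_eq_square algebra_simps)
    also have "\<dots> = (\<Sum>x\<in>?I. real x ^ 2 * ?p x) - 2 * E * (\<Sum>x\<in>?I. real x * ?p x) + E ^ 2 * (\<Sum>x\<in>?I. ?p x)"
      by (simp add: sum.distrib sum_subtractf sum_distrib_left)
    finally show ?thesis using Edef by simp
  qed
  have n0: "real n > 0" using assms(1) by simp
  have hV: "VX_p n m k l = (real n + 1) * E - Kr - E ^ 2" using V C A by (simp add: power2_eq_square)
  have R: "E / real n * (1 - E / real n) + E / real n ^ 2 - Kr / real n ^ 2
      = ((real n + 1) * E - Kr - E ^ 2) / real n ^ 2"
    using n0 by (simp add: field_simps power2_eq_square)
  show ?thesis unfolding E_def[symmetric] Kr_def[symmetric] R hV ..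
qed

end
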